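(* Let $T$ be a subcubic tree of dissociation number $\psi$. Then $\Phi(T)\le 1.466^{\psi+2}$.
   Context: All graphs are finite, simple and undirected. A subcubic tree is a tree of maximum degree at most $3$. A dissociation set in a graph $G$ is a vertex subset $F$ such that the induced subgraph $G[F]$ has maximum degree at most $1$; a maximum dissociation set is one of maximum cardinality, and the dissociation number $\psi(G)$ is that cardinality. $\Phi(G)$ denotes the number of maximum dissociation sets of $G$. *)

theory Defs
  imports Complex_Main
begin

definition simple_graph :: "'a set \<Rightarrow> ('a \<Rightarrow> 'a \<Rightarrow> bool) \<Rightarrow> bool" where
  "simple_graph V E \<longleftrightarrow> finite V \<and> (\<forall>u v. E u v \<longrightarrow> u \<in> V \<and> v \<in> V)
     \<and> (\<forall>u v. E u v \<longrightarrow> E v u) \<and> (\<forall>v. \<not> E v v)"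

definition neighbours :: "('a \<Rightarrow> 'a \<Rightarrow> bool) \<Rightarrow> 'a \<Rightarrow> 'a set" where
  "neighbours E v = {u. E v u}"

definition degree :: "('a \<Rightarrow> 'a \<Rightarrow> bool) \<Rightarrow> 'a \<Rightarrow> nat" where
  "degree E v = card (neighbours E v)"

definition connected_graph :: "'a set \<Rightarrow> ('a \<Rightarrow> 'a \<Rightarrow> bool) \<Rightarrow> bool" where
  "connected_graph V E \<longleftrightarrow> V \<noteq> {} \<and> (\<forall>u\<in>V. \<forall>v\<in>V. E\<^sup>*\<^sup>* u v)"

definition is_cycle :: "('a \<Rightarrow> 'a \<Rightarrow> bool) \<Rightarrow> 'a list \<Rightarrow> bool" where
  "is_cycle E cs \<longleftrightarrow> length cs \<ge> 3 \<and> distinct cs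
     \<and> (\<forall>i. Suc i < length cs \<longrightarrow> E (cs ! i) (cs ! Suc i))
     \<and> E (last cs) (hd cs)"

definition acyclic_graph :: "('a \<Rightarrow> 'a \<Rightarrow> bool) \<Rightarrow> bool" where
  "acyclic_graph E \<longleftrightarrow> \<not> (\<exists>cs. is_cycle E cs)"

definition is_tree :: "'a set \<Rightarrow> ('a \<Rightarrow> 'a \<Rightarrow> bool) \<Rightarrow> bool" where
  "is_tree V E \<longleftrightarrow> simple_graph V E \<and> connected_graph V E \<and> acyclic_graph E"

definition subcubic_tree :: "'a set \<Rightarrow> ('a \<Rightarrow> 'a \<Rightarrow> bool) \<Rightarrow> bool" where
  "subcubic_tree V E \<longleftrightarrow> is_tree V E \<and> (\<forall>v\<in>V. degree E v \<le> 3)"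

definition dissociation_set :: "'a set \<Rightarrow> ('a \<Rightarrow> 'a \<Rightarrow> bool) \<Rightarrow> 'a set \<Rightarrow> bool" where
  "dissociation_set V E F \<longleftrightarrow> F \<subseteq> V \<and> (\<forall>v\<in>F. card (neighbours E v \<inter> F) \<le> 1)"

definition dissociation_number :: "'a set \<Rightarrow> ('a \<Rightarrow> 'a \<Rightarrow> bool) \<Rightarrow> nat" where
  "dissociation_number V E = Max (card ` {F. dissociation_set V E F})"

definition max_dissociation_set :: "'a set \<Rightarrow> ('a \<Rightarrow> 'a \<Rightarrow> bool) \<Rightarrow> 'a set \<Rightarrow> bool" where
  "max_dissociation_set V E F \<longleftrightarrow> dissociation_set V E F
     \<and> card F = dissociation_number V E"

definition num_max_dissociation_sets :: "'a set \<Rightarrow> ('a \<Rightarrow> 'a \<Rightarrow> bool) \<Rightarrow> nat" where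
  "num_max_dissociation_sets V E = card {F. max_dissociation_set V E F}"

end

theory Submission
  imports Defs "HOL-Library.Transitive_Closure_Table"
begin

section \<open>Tropical counting pairs\<close>

type_synonym tc = "nat \<times> nat"

definition tplus :: "tc \<Rightarrow> tc \<Rightarrow> tc" where
  "tplus a b = (if snd a = 0 then b else if snd b = 0 then a
     else if fst a < fst b then b else if fst b < fst a then a else (fst a, snd a + snd b))"

definition ttimes :: "tc \<Rightarrow> tc \<Rightarrow> tc" where
  "ttimes a b = (if snd a = 0 \<or> snd b = 0 then (0,0) else (fst a + fst b, snd a * snd b))"

definition ev :: "'a set set \<Rightarrow> tc" where
  "ev D = (if D = {} then (0,0) else (Max (card ` D), card {F\<in>D. card F = Max (card ` D)}))"

lemma ev_empty[simp]: "ev {} = (0,0)" by (simp add: ev_def)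

lemma ev_pos:
  assumes "finite D" "D \<noteq> {}" shows "0 < snd (ev D)"
proof -
  have "Max (card ` D) \<in> card ` D" using assms by simp
  then obtain F where "F \<in> D" "card F = Max (card ` D)" by auto
  then have "{F\<in>D. card F = Max (card ` D)} \<noteq> {}" by auto
  moreover have "finite {F\<in>D. card F = Max (card ` D)}" using assms by simp
  ultimately show ?thesis using assms by (simp add: ev_def card_gt_0_iff)
qed

lemma ev_snd_zero: "finite D \<Longrightarrow> snd (ev D) = 0 \<longleftrightarrow> D = {}"
  by (cases "D = {}") (auto dest: ev_pos)

lemma ev_union:
  assumes fA: "finite A" and fB: "finite B" and dis: "A \<inter> B = {}"
  shows "ev (A \<union> B) = tplus (ev A) (ev B)"
proof (cases "A = {} \<or> B = {}")
  case True
  then show ?thesis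
  proof
    assume "A = {}" then show ?thesis by (simp add: tplus_def)
  next
    assume B: "B = {}"
    show ?thesis
    proof (cases "A = {}")
      case True then show ?thesis using B by (simp add: tplus_def)
    next
      case False
      then have "snd (ev A) \<noteq> 0" using ev_pos[OF fA] by auto
      then show ?thesis using B by (simp add: tplus_def)
    qed
  qed
next
  case False
  then have nA: "A \<noteq> {}" and nB: "B \<noteq> {}" by auto
  define mA where "mA = Max (card ` A)"
  define mB where "mB = Max (card ` B)"
  have eA: "ev A = (mA, card {F\<in>A. card F = mA})" using nA by (simp add: ev_def mA_def)
  have eB: "ev B = (mB, card {F\<in>B. card F = mB})" using nB by (simp add: ev_def mB_def)
  have pA: "snd (ev A) \<noteq> 0" and pB: "snd (ev B) \<noteq> 0" using ev_pos[OF fA nA] ev_pos[OF fB nB] by auto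
  have leA: "\<And>F. F \<in> A \<Longrightarrow> card F \<le> mA" using fA by (simp add: mA_def)
  have leB: "\<And>F. F \<in> B \<Longrightarrow> card F \<le> mB" using fB by (simp add: mB_def)
  have inA: "mA \<in> card ` A" using fA nA by (simp add: mA_def)
  have inB: "mB \<in> card ` B" using fB nB by (simp add: mB_def)
  have MU: "Max (card ` (A \<union> B)) = max mA mB"
    using fA fB nA nB by (simp add: image_Un Max_Un mA_def mB_def)
  have eU: "ev (A \<union> B) = (max mA mB, card {F\<in>A \<union> B. card F = max mA mB})"
    using nA by (simp add: ev_def MU)
  show ?thesis
  proof (cases "mA < mB")
    case True
    have "{F\<in>A \<union> B. card F = max mA mB} = {F\<in>B. card F = mB}"
      using True by (auto simp: max_def dest: leA)
    then show ?thesis using True eU eA eB pA pB by (simp add: tplus_def)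
  next
    case False
    show ?thesis
    proof (cases "mB < mA")
      case True
      have "{F\<in>A \<union> B. card F = max mA mB} = {F\<in>A. card F = mA}"
        using True by (auto simp: max_def dest: leB)
      then show ?thesis using True False eU eA eB pA pB by (simp add: tplus_def)
    next
      case False2: False
      then have eq: "mA = mB" using False by simp
      have "{F\<in>A \<union> B. card F = max mA mB} = {F\<in>A. card F = mA} \<union> {F\<in>B. card F = mB}"
        using eq by auto
      moreover have "card ({F\<in>A. card F = mA} \<union> {F\<in>B. card F = mB})
          = card {F\<in>A. card F = mA} + card {F\<in>B. card F = mB}"
        by (rule card_Un_disjoint) (use fA fB dis in auto)
      ultimately show ?thesis using eq eU eA eB pA pB by (simp add: tplus_def)
    qed
  qed
qed

definition prodU :: "'a set set \<Rightarrow> 'a set set \<Rightarrow> 'a set set" where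
  "prodU A B = (\<lambda>(X,Y). X \<union> Y) ` (A \<times> B)"

lemma ev_prod:
  assumes fA: "finite A" and fB: "finite B"
    and sA: "\<And>X. X \<in> A \<Longrightarrow> X \<subseteq> U1" and sB: "\<And>Y. Y \<in> B \<Longrightarrow> Y \<subseteq> U2"
    and fU1: "finite U1" and fU2: "finite U2" and dis: "U1 \<inter> U2 = {}"
  shows "ev (prodU A B) = ttimes (ev A) (ev B)"
proof (cases "A = {} \<or> B = {}")
  case True
  then have "prodU A B = {}" by (auto simp: prodU_def)
  moreover have "snd (ev A) = 0 \<or> snd (ev B) = 0" using True by auto
  ultimately show ?thesis by (auto simp: ttimes_def)
next
  case False
  then have nA: "A \<noteq> {}" and nB: "B \<noteq> {}" by auto
  define mA where "mA = Max (card ` A)"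
  define mB where "mB = Max (card ` B)"
  have eA: "ev A = (mA, card {F\<in>A. card F = mA})" using nA by (simp add: ev_def mA_def)
  have eB: "ev B = (mB, card {F\<in>B. card F = mB})" using nB by (simp add: ev_def mB_def)
  have pA: "snd (ev A) \<noteq> 0" and pB: "snd (ev B) \<noteq> 0" using ev_pos[OF fA nA] ev_pos[OF fB nB] by auto
  have leA: "\<And>F. F \<in> A \<Longrightarrow> card F \<le> mA" using fA by (simp add: mA_def)
  have leB: "\<And>F. F \<in> B \<Longrightarrow> card F \<le> mB" using fB by (simp add: mB_def)
  have inA: "mA \<in> card ` A" using fA nA by (simp add: mA_def)
  have inB: "mB \<in> card ` B" using fB nB by (simp add: mB_def)
  have cardU: "card (X \<union> Y) = card X + card Y" if "X \<in> A" "Y \<in> B" for X Y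
  proof -
    have "X \<subseteq> U1" "Y \<subseteq> U2" using sA sB that by auto
    then have "finite X" "finite Y" "X \<inter> Y = {}" using fU1 fU2 dis finite_subset by blast+
    then show ?thesis by (simp add: card_Un_disjoint)
  qed
  have inj: "inj_on (\<lambda>(X,Y). X \<union> Y) (A \<times> B)"
  proof (rule inj_onI, clarify)
    fix X Y X' Y' assume h: "X \<in> A" "Y \<in> B" "X' \<in> A" "Y' \<in> B" "X \<union> Y = X' \<union> Y'"
    have "X = (X \<union> Y) \<inter> U1" using sA sB h dis by blast
    also have "\<dots> = (X' \<union> Y') \<inter> U1" using h by simp
    also have "\<dots> = X'" using sA sB h dis by blast
    finally have 1: "X = X'" .
    have "Y = (X \<union> Y) \<inter> U2" using sA sB h dis by blast
    also have "\<dots> = (X' \<union> Y') \<inter> U2" using h by simp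
    also have "\<dots> = Y'" using sA sB h dis by blast
    finally show "X = X' \<and> Y = Y'" using 1 by simp
  qed
  have fP: "finite (prodU A B)" using fA fB by (simp add: prodU_def)
  have nP: "prodU A B \<noteq> {}" using nA nB by (auto simp: prodU_def)
  have MP: "Max (card ` prodU A B) = mA + mB"
  proof (rule antisym)
    have "\<forall>F\<in>prodU A B. card F \<le> mA + mB"
      by (auto simp: prodU_def cardU intro!: add_mono leA leB)
    then show "Max (card ` prodU A B) \<le> mA + mB"
      using fP nP by simp
  next
    obtain X Y where "X \<in> A" "card X = mA" "Y \<in> B" "card Y = mB" using inA inB by auto
    then have "mA + mB \<in> card ` prodU A B" by (force simp: prodU_def cardU)
    then show "mA + mB \<le> Max (card ` prodU A B)" using fP by simp
  qed
  have cnt: "{F\<in>prodU A B. card F = mA + mB}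
      = (\<lambda>(X,Y). X \<union> Y) ` ({X\<in>A. card X = mA} \<times> {Y\<in>B. card Y = mB})"
  proof
    show "{F\<in>prodU A B. card F = mA + mB}
      \<subseteq> (\<lambda>(X,Y). X \<union> Y) ` ({X\<in>A. card X = mA} \<times> {Y\<in>B. card Y = mB})"
    proof clarify
      fix F assume "F \<in> prodU A B" "card F = mA + mB"
      then obtain X Y where h: "X \<in> A" "Y \<in> B" "F = X \<union> Y" "card X + card Y = mA + mB"
        by (auto simp: prodU_def cardU)
      then have "card X = mA" "card Y = mB" using leA[OF h(1)] leB[OF h(2)] h(4) by linarith+
      then show "F \<in> (\<lambda>(X,Y). X \<union> Y) ` ({X\<in>A. card X = mA} \<times> {Y\<in>B. card Y = mB})"
        using h by auto
    qed
  next
    show "(\<lambda>(X,Y). X \<union> Y) ` ({X\<in>A. card X = mA} \<times> {Y\<in>B. card Y = mB})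
      \<subseteq> {F\<in>prodU A B. card F = mA + mB}"
      by (auto simp: prodU_def cardU)
  qed
  have "card {F\<in>prodU A B. card F = mA + mB} = card {X\<in>A. card X = mA} * card {Y\<in>B. card Y = mB}"
    unfolding cnt
    by (subst card_image) (auto intro: inj_on_subset[OF inj] simp: card_cartesian_product)
  then have "ev (prodU A B) = (mA + mB, card {X\<in>A. card X = mA} * card {Y\<in>B. card Y = mB})"
    using nP by (simp add: ev_def MP)
  then show ?thesis using eA eB pA pB by (simp add: ttimes_def)
qed

type_synonym pat = "int option \<times> int option"
type_synonym 'a vec3 = "'a \<times> 'a \<times> 'a"

fun omax :: "int option \<Rightarrow> int option \<Rightarrow> int option" where
  "omax None b = b"
| "omax a None = a"
| "omax (Some x) (Some y) = Some (max x y)"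

fun oadd :: "int option \<Rightarrow> int option \<Rightarrow> int option" where
  "oadd (Some x) (Some y) = Some (x + y)"
| "oadd _ _ = None"

definition oz :: "int option \<Rightarrow> int" where "oz a = (case a of None \<Rightarrow> 0 | Some x \<Rightarrow> x)"
definition amax :: "int option \<Rightarrow> int option \<Rightarrow> int" where
  "amax k1 k2 = max 0 (max (oz k1) (oz k2))"
definition ind :: "bool \<Rightarrow> 'a::comm_semiring_1" where "ind b = (if b then 1 else 0)"

definition osub :: "int option \<Rightarrow> int \<Rightarrow> int option" where
  "osub a M = map_option (\<lambda>x. x - M) a"

definition cpat :: "pat \<Rightarrow> pat \<Rightarrow> pat" where
  "cpat p q = (let M = amax (fst q) (snd q); T = omax (snd p) (oadd (fst p) (fst q))
      in (osub (fst p) M, osub T M))"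

fun cout :: "pat \<Rightarrow> pat \<Rightarrow> 'a::comm_semiring_1 vec3 \<Rightarrow> 'a vec3 \<Rightarrow> 'a vec3" where
  "cout p q (x0,x1,x2) (y0,y1,y2) = (let M = amax (fst q) (snd q); ta = snd p; tb = oadd (fst p) (fst q); T = omax ta tb in
     (x0 * (y0 * ind (M = 0) + y1 * ind (fst q = Some M) + y2 * ind (snd q = Some M)),
      x1 * y0,
      ind (ta = T) * x2 * y0 + ind (tb = T) * x1 * y1))"

fun allsel :: "pat \<Rightarrow> 'a::comm_semiring_1 vec3 \<Rightarrow> 'a" where
  "allsel r (o0,o1,o2) = (let M = amax (fst r) (snd r) in
      ind (M = 0) * o0 + ind (fst r = Some M) * o1 + ind (snd r = Some M) * o2)"

definition cc :: real where "cc = 733 / 500"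

lemma cc_pos: "0 < cc" by (simp add: cc_def)

definition lv :: "nat \<Rightarrow> tc \<Rightarrow> int option" where
  "lv L a = (if snd a = 0 then None else Some (int (fst a) - int L))"

definition xv :: "tc \<Rightarrow> real" where
  "xv a = real (snd a) / cc ^ fst a"

lemma xv_nonneg: "0 \<le> xv a" using cc_pos by (simp add: xv_def)

lemma xv_zero: "snd a = 0 \<Longrightarrow> xv a = 0" by (simp add: xv_def)

lemma lv_times: "lv (L1 + L2) (ttimes a b) = oadd (lv L1 a) (lv L2 b)"
  by (auto simp: lv_def ttimes_def)

lemma xv_times: "xv (ttimes a b) = xv a * xv b"
  by (auto simp: xv_def ttimes_def power_add)

lemma lv_plus: "lv L (tplus a b) = omax (lv L a) (lv L b)"
  by (auto simp: lv_def tplus_def max_def)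

lemma xv_plus: "xv (tplus a b) = ind (lv L a = omax (lv L a) (lv L b)) * xv a
    + ind (lv L b = omax (lv L a) (lv L b)) * xv b"
  by (auto simp: lv_def tplus_def max_def ind_def xv_def add_divide_distrib)

lemma lv_shift: "lv (L + d) a = osub (lv L a) (int d)"
  by (auto simp: lv_def osub_def)

type_synonym st3 = "tc \<times> tc \<times> tc"

definition combine :: "st3 \<Rightarrow> st3 \<Rightarrow> st3" where
  "combine S T = (let (a0,a1,a2) = S; (b0,b1,b2) = T in
     (ttimes a0 (tplus (tplus b0 b1) b2), ttimes a1 b0, tplus (ttimes a2 b0) (ttimes a1 b1)))"

definition good :: "st3 \<Rightarrow> bool" where
  "good S = (0 < snd (fst S) \<and> 0 < snd (fst (snd S)))"

definition patS :: "st3 \<Rightarrow> pat" where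
  "patS S = (lv (fst (fst S)) (fst (snd S)), lv (fst (fst S)) (snd (snd S)))"

definition xS :: "st3 \<Rightarrow> real vec3" where
  "xS S = (xv (fst S), xv (fst (snd S)), xv (snd (snd S)))"

definition allst :: "st3 \<Rightarrow> tc" where
  "allst S = tplus (tplus (fst S) (fst (snd S))) (snd (snd S))"

lemma lv_self: "0 < snd a \<Longrightarrow> lv (fst a) a = Some 0"
  by (simp add: lv_def)

lemma lv_some: "0 < snd a \<Longrightarrow> lv L a = Some (int (fst a) - int L)"
  by (simp add: lv_def)

lemma omax_some0: "omax (omax (Some 0) k1) k2 = Some (amax k1 k2)"
  by (cases k1; cases k2) (auto simp: amax_def oz_def max_def)

lemma amax_nonneg: "0 \<le> amax k1 k2" by (simp add: amax_def)

lemma allst_lv: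
  assumes "0 < snd a0"
  shows "lv (fst a0) (tplus (tplus a0 a1) a2) = Some (amax (lv (fst a0) a1) (lv (fst a0) a2))"
  using assms by (simp add: lv_plus lv_self omax_some0)

lemma allst_fst:
  assumes "0 < snd a0"
  shows "int (fst (tplus (tplus a0 a1) a2)) = int (fst a0) + amax (lv (fst a0) a1) (lv (fst a0) a2)"
    and "0 < snd (tplus (tplus a0 a1) a2)"
proof -
  have h: "lv (fst a0) (tplus (tplus a0 a1) a2) = Some (amax (lv (fst a0) a1) (lv (fst a0) a2))"
    by (rule allst_lv[OF assms])
  then show "0 < snd (tplus (tplus a0 a1) a2)" by (auto simp: lv_def split: if_splits)
  with h show "int (fst (tplus (tplus a0 a1) a2)) = int (fst a0) + amax (lv (fst a0) a1) (lv (fst a0) a2)"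
    by (auto simp: lv_def split: if_splits)
qed

lemma ind_cong: "P = Q \<Longrightarrow> ind P = ind Q" by simp

lemma xv_all3:
  assumes "0 < snd a0"
  shows "xv (tplus (tplus a0 a1) a2) =
     xv a0 * ind (amax (lv (fst a0) a1) (lv (fst a0) a2) = 0)
   + xv a1 * ind (lv (fst a0) a1 = Some (amax (lv (fst a0) a1) (lv (fst a0) a2)))
   + xv a2 * ind (lv (fst a0) a2 = Some (amax (lv (fst a0) a1) (lv (fst a0) a2)))"
proof -
  define L where "L = fst a0"
  define k1 where "k1 = lv L a1"
  define k2 where "k2 = lv L a2"
  have l0: "lv L a0 = Some 0" using assms by (simp add: L_def lv_self)
  have z1: "k1 = None \<Longrightarrow> xv a1 = 0" by (auto simp: k1_def lv_def xv_def split: if_splits)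
  have z2: "k2 = None \<Longrightarrow> xv a2 = 0" by (auto simp: k2_def lv_def xv_def split: if_splits)
  have "xv (tplus (tplus a0 a1) a2) = ind (omax (Some 0) k1 = omax (omax (Some 0) k1) k2) *
      (ind (Some 0 = omax (Some 0) k1) * xv a0 + ind (k1 = omax (Some 0) k1) * xv a1)
      + ind (k2 = omax (omax (Some 0) k1) k2) * xv a2"
    by (simp add: xv_plus[where L=L] lv_plus l0 k1_def k2_def)
  also have "\<dots> = xv a0 * ind (amax k1 k2 = 0) + xv a1 * ind (k1 = Some (amax k1 k2))
      + xv a2 * ind (k2 = Some (amax k1 k2))"
    by (cases k1; cases k2) (auto simp: amax_def oz_def max_def ind_def z1 z2)
  finally show ?thesis by (simp add: L_def k1_def k2_def)
qed

lemma combine_good: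
  assumes gS: "good S" and gT: "good T" shows "good (combine S T)"
proof -
  obtain a0 a1 a2 where S: "S = (a0,a1,a2)" by (cases S) auto
  obtain b0 b1 b2 where T: "T = (b0,b1,b2)" by (cases T) auto
  have pa0: "0 < snd a0" and pa1: "0 < snd a1" using gS by (auto simp: S good_def)
  have pb0: "0 < snd b0" and pb1: "0 < snd b1" using gT by (auto simp: T good_def)
  have "0 < snd (tplus (tplus b0 b1) b2)" using allst_fst(2)[OF pb0] .
  then show ?thesis using pa0 pa1 pb0 by (simp add: good_def combine_def ttimes_def S T)
qed

lemma combine_pat_x:
  assumes gS: "good S" and gT: "good T"
  shows "patS (combine S T) = cpat (patS S) (patS T)"
    and "xS (combine S T) = cout (patS S) (patS T) (xS S) (xS T)"
proof -
  obtain a0 a1 a2 where S: "S = (a0,a1,a2)" by (cases S) auto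
  obtain b0 b1 b2 where T: "T = (b0,b1,b2)" by (cases T) auto
  have pa0: "0 < snd a0" and pa1: "0 < snd a1" using gS by (auto simp: S good_def)
  have pb0: "0 < snd b0" and pb1: "0 < snd b1" using gT by (auto simp: T good_def)
  define B where "B = tplus (tplus b0 b1) b2"
  define l1 where "l1 = lv (fst a0) a1"
  define l2 where "l2 = lv (fst a0) a2"
  define k1 where "k1 = lv (fst b0) b1"
  define k2 where "k2 = lv (fst b0) b2"
  define M where "M = amax k1 k2"
  have M0: "0 \<le> M" by (simp add: M_def amax_nonneg)
  have fB: "int (fst B) = int (fst b0) + M" and pB: "0 < snd B"
    using allst_fst[OF pb0, of b1 b2] by (simp_all add: B_def M_def k1_def k2_def)
  have c0: "fst (combine S T) = ttimes a0 B" by (simp add: combine_def S T B_def)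
  have c1: "fst (snd (combine S T)) = ttimes a1 b0" by (simp add: combine_def S T)
  have c2: "snd (snd (combine S T)) = tplus (ttimes a2 b0) (ttimes a1 b1)" by (simp add: combine_def S T)
  have fc0: "fst (ttimes a0 B) = fst a0 + fst B" using pa0 pB by (simp add: ttimes_def)
  define L where "L = fst a0 + fst b0"
  have base: "fst a0 + fst B = L + nat M" using fB M0 by (simp add: L_def)
  have lb0: "lv (fst b0) b0 = Some 0" using pb0 by (simp add: lv_self)
  have e1: "lv L (ttimes a1 b0) = l1"
    using lv_times[of "fst a0" "fst b0" a1 b0] lb0 pa1 by (simp add: L_def l1_def lv_def)
  have e2: "lv L (tplus (ttimes a2 b0) (ttimes a1 b1)) = omax l2 (oadd l1 k1)"
  proof -
    have "lv L (ttimes a2 b0) = l2"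
      using lv_times[of "fst a0" "fst b0" a2 b0] lb0 by (cases "snd a2 = 0") (simp_all add: L_def l2_def lv_def)
    moreover have "lv L (ttimes a1 b1) = oadd l1 k1"
      using lv_times[of "fst a0" "fst b0" a1 b1] by (simp add: L_def l1_def k1_def)
    ultimately show ?thesis by (simp add: lv_plus)
  qed
  have pS: "patS S = (l1, l2)" by (simp add: patS_def S l1_def l2_def)
  have pT: "patS T = (k1, k2)" by (simp add: patS_def T k1_def k2_def)
  have "patS (combine S T) = (osub l1 M, osub (omax l2 (oadd l1 k1)) M)"
    unfolding patS_def c0 c1 c2 fc0 base lv_shift e1 e2
    using M0 by simp
  then show "patS (combine S T) = cpat (patS S) (patS T)"
    by (simp add: pS pT cpat_def M_def Let_def)
  have xB: "xv B = xv b0 * ind (M = 0) + xv b1 * ind (k1 = Some M) + xv b2 * ind (k2 = Some M)"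
    unfolding B_def M_def k1_def k2_def by (rule xv_all3[OF pb0])
  have x2: "xv (tplus (ttimes a2 b0) (ttimes a1 b1)) =
      ind (l2 = omax l2 (oadd l1 k1)) * xv a2 * xv b0 + ind (oadd l1 k1 = omax l2 (oadd l1 k1)) * xv a1 * xv b1"
  proof -
    have "lv L (ttimes a2 b0) = l2"
      using lv_times[of "fst a0" "fst b0" a2 b0] lb0 by (cases "snd a2 = 0") (simp_all add: L_def l2_def lv_def)
    moreover have "lv L (ttimes a1 b1) = oadd l1 k1"
      using lv_times[of "fst a0" "fst b0" a1 b1] by (simp add: L_def l1_def k1_def)
    ultimately show ?thesis by (simp add: xv_plus[where L=L] xv_times)
  qed
  show "xS (combine S T) = cout (patS S) (patS T) (xS S) (xS T)"
    unfolding xS_def c0 c1 c2 pS pT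
    by (simp add: Let_def S T xv_times xB x2 M_def algebra_simps)
qed

lemma allst_x:
  assumes "good S"
  shows "xv (allst S) = allsel (patS S) (xS S)"
proof -
  obtain a0 a1 a2 where S: "S = (a0,a1,a2)" by (cases S) auto
  have "0 < snd a0" using assms by (simp add: good_def S)
  from xv_all3[OF this, of a1 a2] show ?thesis
    by (simp add: allst_def S patS_def xS_def Let_def algebra_simps)
qed

section \<open>Vectors, cones and hulls\<close>

fun vadd :: "'a::plus vec3 \<Rightarrow> 'a vec3 \<Rightarrow> 'a vec3" where
  "vadd (a,b,c) (d,e,f) = (a+d, b+e, c+f)"
fun vsc :: "'a::times \<Rightarrow> 'a vec3 \<Rightarrow> 'a vec3" where
  "vsc s (a,b,c) = (s*a, s*b, s*c)"
fun vle :: "'a::ord vec3 \<Rightarrow> 'a vec3 \<Rightarrow> bool" where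
  "vle (a,b,c) (d,e,f) = (a \<le> d \<and> b \<le> e \<and> c \<le> f)"
definition vlsum :: "('a::comm_semiring_1 \<times> 'a vec3) list \<Rightarrow> 'a vec3" where
  "vlsum ws = foldr (\<lambda>(a,u) acc. vadd (vsc a u) acc) ws (0,0,0)"
fun vof :: "int vec3 \<Rightarrow> real vec3" where
  "vof (a,b,c) = (of_int a, of_int b, of_int c)"

definition Dsc :: int where "Dsc = 100000"
definition Dr :: real where "Dr = 100000"
definition rv :: "int vec3 \<Rightarrow> real vec3" where "rv u = vsc (1/Dr) (vof u)"

lemma vlsum_Nil[simp]: "vlsum [] = (0,0,0)" by (simp add: vlsum_def)
lemma vlsum_Cons[simp]: "vlsum ((a,u)#ws) = vadd (vsc a u) (vlsum ws)" by (simp add: vlsum_def)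
lemma vlsum_append: "vlsum (ws1 @ ws2) = vadd (vlsum ws1) (vlsum ws2)"
proof (induction ws1)
  case Nil
  obtain a b c where "vlsum ws2 = (a,b,c)" by (cases "vlsum ws2") auto
  then show ?case by simp
next
  case (Cons w ws1)
  obtain a u where w: "w = (a,u)" by (cases w) auto
  obtain u0 u1 u2 where u: "u = (u0,u1,u2)" by (cases u) auto
  obtain s0 s1 s2 where s: "vlsum ws1 = (s0,s1,s2)" by (cases "vlsum ws1") auto
  obtain t0 t1 t2 where t: "vlsum ws2 = (t0,t1,t2)" by (cases "vlsum ws2") auto
  show ?case using Cons by (simp add: w u s t algebra_simps)
qed

lemma vle_refl: "vle x (x::'a::order vec3)" by (cases x) auto
lemma vle_trans: "vle x y \<Longrightarrow> vle y z \<Longrightarrow> vle x (z::'a::order vec3)"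
  by (cases x; cases y; cases z) auto
lemma vle_add: "vle x y \<Longrightarrow> vle x' y' \<Longrightarrow> vle (vadd x x') (vadd y (y'::'a::ordered_ab_semigroup_add vec3))"
  by (cases x; cases y; cases x'; cases y') (auto intro: add_mono)
lemma vle_sc: "0 \<le> (a::real) \<Longrightarrow> vle x y \<Longrightarrow> vle (vsc a x) (vsc a y)"
  by (cases x; cases y) (auto intro: mult_left_mono)
lemma vle_sc_iff: "0 < (a::real) \<Longrightarrow> vle (vsc a x) (vsc a y) = vle x y"
  by (cases x; cases y) auto
lemma vsc_vsc: "vsc a (vsc b x) = vsc (a*b) (x::'a::comm_semiring_1 vec3)"
  by (cases x) (auto simp: algebra_simps)
lemma vsc_one: "vsc 1 x = (x::'a::comm_semiring_1 vec3)" by (cases x) auto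
lemma vadd_zero: "vadd x (0,0,0) = (x::'a::comm_semiring_1 vec3)" by (cases x) auto
lemma vsc_vadd: "vsc a (vadd x y) = vadd (vsc a x) (vsc a (y::'a::comm_semiring_1 vec3))"
  by (cases x; cases y) (auto simp: algebra_simps)

lemma vlsum_map_sc: "vlsum (map (\<lambda>(a,u). (s * a, vsc t u)) ws) = vsc (s*t) (vlsum ws)"
proof (induction ws)
  case Nil then show ?case by simp
next
  case (Cons w ws)
  obtain a u where w: "w = (a,u)" by (cases w) auto
  obtain u0 u1 u2 where u: "u = (u0,u1,u2)" by (cases u) auto
  obtain s0 s1 s2 where s: "vlsum ws = (s0,s1,s2)" by (cases "vlsum ws") auto
  show ?case using Cons by (simp add: w u s algebra_simps)
qed

definition vnn :: "real vec3 \<Rightarrow> bool" where "vnn x = vle (0,0,0) x"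

definition cone :: "real vec3 \<Rightarrow> real \<Rightarrow> real vec3 list \<Rightarrow> bool" where
  "cone x s V = (\<exists>ws. (\<forall>(a,u)\<in>set ws. 0 \<le> a \<and> u \<in> set V) \<and> sum_list (map fst ws) = s \<and> vle x (vlsum ws))"

definition inh :: "real vec3 \<Rightarrow> real vec3 list \<Rightarrow> bool" where
  "inh x V = cone x 1 V"

lemma cone_mono: "vle x y \<Longrightarrow> cone y s V \<Longrightarrow> cone x s V"
  unfolding cone_def using vle_trans by blast

lemma cone_add: assumes "cone x s V" "cone y t V" shows "cone (vadd x y) (s+t) V"
proof -
  obtain ws1 where 1: "\<forall>(a,u)\<in>set ws1. 0 \<le> a \<and> u \<in> set V" "sum_list (map fst ws1) = s" "vle x (vlsum ws1)"
    using assms(1) by (auto simp: cone_def)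
  obtain ws2 where 2: "\<forall>(a,u)\<in>set ws2. 0 \<le> a \<and> u \<in> set V" "sum_list (map fst ws2) = t" "vle y (vlsum ws2)"
    using assms(2) by (auto simp: cone_def)
  show ?thesis unfolding cone_def
    by (rule exI[of _ "ws1 @ ws2"]) (use 1 2 in \<open>auto simp: vlsum_append intro: vle_add\<close>)
qed

lemma cone_scale: assumes "0 \<le> a" "cone x s V" shows "cone (vsc a x) (a*s) V"
proof -
  obtain ws where 1: "\<forall>(b,u)\<in>set ws. 0 \<le> b \<and> u \<in> set V" "sum_list (map fst ws) = s" "vle x (vlsum ws)"
    using assms(2) by (auto simp: cone_def)
  have "vlsum (map (\<lambda>(b,u). (a * b, vsc 1 u)) ws) = vsc (a*1) (vlsum ws)" by (rule vlsum_map_sc)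
  then have e: "vlsum (map (\<lambda>(b,u). (a * b, u)) ws) = vsc a (vlsum ws)" by (simp add: vsc_one)
  have s: "sum_list (map (fst \<circ> (\<lambda>(b,u). (a * b, u))) ws) = a * sum_list (map fst ws)"
    by (induction ws) (auto simp: algebra_simps)
  show ?thesis unfolding cone_def
    apply (rule exI[of _ "map (\<lambda>(b,u). (a * b, u)) ws"])
    using 1 assms(1) by (auto simp: e s intro: vle_sc)
qed

lemma cone_zero: "cone (0,0,0) 0 V"
  unfolding cone_def by (rule exI[of _ "[]"]) simp

lemma cone_vlsum:
  assumes "\<forall>(a,u)\<in>set ws. 0 \<le> a \<and> cone u 1 V"
  shows "cone (vlsum ws) (sum_list (map fst ws)) V"
  using assms
proof (induction ws)
  case Nil then show ?case using cone_zero by simp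
next
  case (Cons w ws)
  obtain a u where w: "w = (a,u)" by (cases w) auto
  have "cone (vsc a u) (a*1) V" using Cons.prems w by (intro cone_scale) auto
  moreover have "cone (vlsum ws) (sum_list (map fst ws)) V" using Cons by auto
  ultimately show ?case using cone_add w by fastforce
qed

lemma cout_add_l: "cout p q (vadd x x') y = vadd (cout p q x y) (cout p q x' y)"
  by (cases x; cases x'; cases y) (simp add: Let_def algebra_simps)
lemma cout_add_r: "cout p q x (vadd y y') = vadd (cout p q x y) (cout p q x y')"
  by (cases x; cases y'; cases y) (simp add: Let_def algebra_simps)
lemma cout_sc_l: "cout p q (vsc a x) y = vsc a (cout p q x y)"
  by (cases x; cases y) (simp add: Let_def algebra_simps)
lemma cout_sc_r: "cout p q x (vsc a y) = vsc a (cout p q x y)"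
  by (cases x; cases y) (simp add: Let_def algebra_simps)
lemma cout_zero_l: "cout p q (0,0,0) y = (0,0,0)"
  by (cases y) (simp add: Let_def)
lemma cout_zero_r: "cout p q x (0,0,0) = (0,0,0)"
  by (cases x) (simp add: Let_def)

lemma cout_vlsum_l: "cout p q (vlsum ws) y = vlsum (map (\<lambda>(a,u). (a, cout p q u y)) ws)"
proof (induction ws)
  case Nil then show ?case by (simp add: cout_zero_l)
next
  case (Cons w ws)
  obtain a u where w: "w = (a,u)" by (cases w) auto
  show ?case by (simp only: w vlsum_Cons cout_add_l cout_sc_l Cons.IH list.map prod.case)
qed
lemma cout_vlsum_r: "cout p q x (vlsum ws) = vlsum (map (\<lambda>(a,u). (a, cout p q x u)) ws)"
proof (induction ws)
  case Nil then show ?case by (simp add: cout_zero_r)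
next
  case (Cons w ws)
  obtain a u where w: "w = (a,u)" by (cases w) auto
  show ?case by (simp only: w vlsum_Cons cout_add_r cout_sc_r Cons.IH list.map prod.case)
qed

lemma ind_nonneg: "0 \<le> (ind b :: real)" by (simp add: ind_def)

lemma mono2: "0 \<le> (a::real) \<Longrightarrow> a \<le> a' \<Longrightarrow> 0 \<le> b \<Longrightarrow> b \<le> b' \<Longrightarrow> a * b \<le> a' * b'"
  by (rule mult_mono) auto

lemma cout_mono:
  assumes "vnn x" "vnn y" "vle x x'" "vle y y'"
  shows "vle (cout p q x y) (cout p q x' (y'::real vec3))"
proof -
  obtain x0 x1 x2 where x: "x = (x0,x1,x2)" by (cases x) auto
  obtain y0 y1 y2 where y: "y = (y0,y1,y2)" by (cases y) auto
  obtain x0' x1' x2' where x': "x' = (x0',x1',x2')" by (cases x') auto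
  obtain y0' y1' y2' where y': "y' = (y0',y1',y2')" by (cases y') auto
  have h: "0 \<le> x0" "0 \<le> x1" "0 \<le> x2" "0 \<le> y0" "0 \<le> y1" "0 \<le> y2"
      "x0 \<le> x0'" "x1 \<le> x1'" "x2 \<le> x2'" "y0 \<le> y0'" "y1 \<le> y1'" "y2 \<le> y2'"
    using assms by (auto simp: x y x' y' vnn_def)
  note i = ind_nonneg
  have a: "\<And>i0 i1 i2::real. 0 \<le> i0 \<Longrightarrow> 0 \<le> i1 \<Longrightarrow> 0 \<le> i2 \<Longrightarrow>
     x0 * (y0 * i0 + y1 * i1 + y2 * i2) \<le> x0' * (y0' * i0 + y1' * i1 + y2' * i2)"
    using h by (intro mono2 add_mono mult_right_mono add_nonneg_nonneg mult_nonneg_nonneg) auto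
  have b: "\<And>i0 i1::real. 0 \<le> i0 \<Longrightarrow> 0 \<le> i1 \<Longrightarrow>
     i0 * x2 * y0 + i1 * x1 * y1 \<le> i0 * x2' * y0' + i1 * x1' * y1'"
    using h by (intro add_mono mono2 mult_left_mono mult_nonneg_nonneg) auto
  show ?thesis using a[OF i i i] b[OF i i] h mono2[of x1 x1' y0 y0']
    by (simp add: x y x' y' Let_def)
qed

lemma vnn_vlsum: "\<forall>(a,u)\<in>set ws. 0 \<le> a \<and> vnn u \<Longrightarrow> vnn (vlsum ws)"
proof (induction ws)
  case Nil then show ?case by (simp add: vnn_def)
next
  case (Cons w ws)
  obtain a u where w: "w = (a,u)" by (cases w) auto
  obtain u0 u1 u2 where u: "u = (u0,u1,u2)" by (cases u) auto
  obtain s0 s1 s2 where s: "vlsum ws = (s0,s1,s2)" by (cases "vlsum ws") auto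
  show ?case using Cons by (auto simp: w u s vnn_def)
qed

lemma sum_list_map_mult:
  "sum_list (map fst (map (\<lambda>(a,u). (a, f u)) ws)) = sum_list (map fst ws)"
  by (induction ws) auto
lemma fst_comp_pair[simp]: "fst \<circ> (\<lambda>(b,w). (b, f w)) = fst"
  by auto

lemma hull_closed:
  assumes hx: "inh x V1" and hy: "inh y V2" and nx: "vnn x" and ny: "vnn y"
    and pairs: "\<forall>v\<in>set V1. \<forall>w\<in>set V2. inh (cout p q v w) Vr"
  shows "inh (cout p q x y) Vr"
proof -
  obtain ws1 where 1: "\<forall>(a,u)\<in>set ws1. 0 \<le> a \<and> u \<in> set V1" "sum_list (map fst ws1) = 1" "vle x (vlsum ws1)"
    using hx by (auto simp: inh_def cone_def)
  obtain ws2 where 2: "\<forall>(a,u)\<in>set ws2. 0 \<le> a \<and> u \<in> set V2" "sum_list (map fst ws2) = 1" "vle y (vlsum ws2)"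
    using hy by (auto simp: inh_def cone_def)
  have X: "vnn (vlsum ws1)" using nx 1(3) by (auto simp: vnn_def intro: vle_trans)
  have Y: "vnn (vlsum ws2)" using ny 2(3) by (auto simp: vnn_def intro: vle_trans)
  have m: "vle (cout p q x y) (cout p q (vlsum ws1) (vlsum ws2))"
    by (rule cout_mono[OF nx ny 1(3) 2(3)])
  have inner: "cone (cout p q u (vlsum ws2)) 1 Vr" if "u \<in> set V1" for u
  proof -
    have "cone (vlsum (map (\<lambda>(b,w). (b, cout p q u w)) ws2))
        (sum_list (map fst (map (\<lambda>(b,w). (b, cout p q u w)) ws2))) Vr"
      apply (rule cone_vlsum)
      using 2(1) pairs that by (auto simp: inh_def)
    then show ?thesis by (simp add: cout_vlsum_r sum_list_map_mult 2(2))
  qed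
  have "cone (vlsum (map (\<lambda>(a,u). (a, cout p q u (vlsum ws2))) ws1))
      (sum_list (map fst (map (\<lambda>(a,u). (a, cout p q u (vlsum ws2))) ws1))) Vr"
    apply (rule cone_vlsum)
    using 1(1) inner by auto
  then have "cone (cout p q (vlsum ws1) (vlsum ws2)) 1 Vr"
    by (simp add: cout_vlsum_l sum_list_map_mult 1(2))
  then show ?thesis using m cone_mono by (auto simp: inh_def)
qed

section \<open>Integer certificate checker\<close>

definition wvalid :: "int vec3 list \<Rightarrow> int vec3 \<Rightarrow> (int \<times> int vec3) list \<Rightarrow> bool" where
  "wvalid Vr z ws = (list_all (\<lambda>(a,u). 0 \<le> a \<and> u \<in> set Vr) ws \<and> 0 < sum_list (map fst ws) \<and>
     vle (vsc (sum_list (map fst ws)) z) (vsc Dsc (vlsum ws)))"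

definition chk_pair :: "int vec3 list \<Rightarrow> (pat \<times> pat \<times> int vec3 \<times> int vec3 \<times> (int \<times> int vec3) list) list
    \<Rightarrow> pat \<Rightarrow> pat \<Rightarrow> int vec3 \<Rightarrow> int vec3 \<Rightarrow> bool" where
  "chk_pair Vr wits p q v w = (let z = cout p q v w in
     list_ex (\<lambda>u. vle z (vsc Dsc u)) Vr \<or>
     list_ex (\<lambda>(p',q',v',w',ws). p' = p \<and> q' = q \<and> v' = v \<and> w' = w \<and> wvalid Vr z ws) wits)"

definition chk_class :: "(nat \<times> pat \<times> int vec3 list) list
    \<Rightarrow> (pat \<times> pat \<times> int vec3 \<times> int vec3 \<times> (int \<times> int vec3) list) list \<Rightarrow> nat \<Rightarrow> bool" where
  "chk_class tab wits k = list_all (\<lambda>(k1,p,V1). k1 \<noteq> k - 1 \<or>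
      list_all (\<lambda>(k2,q,V2). k2 \<noteq> 2 \<or>
        list_ex (\<lambda>(k3,r,Vr). k3 = k \<and> r = cpat p q \<and>
           list_all (\<lambda>v. list_all (\<lambda>w. chk_pair Vr wits p q v w) V2) V1) tab) tab) tab"

definition vbox :: "int vec3 list \<Rightarrow> int vec3" where
  "vbox V = (Max (set (map fst V)), Max (set (map (fst o snd) V)), Max (set (map (snd o snd) V)))"

definition chk_final :: "(nat \<times> pat \<times> int vec3 list) list \<Rightarrow> bool" where
  "chk_final tab = list_all (\<lambda>(k1,p,V1). k1 \<noteq> 2 \<or>
      list_all (\<lambda>(k2,q,V2). k2 \<noteq> 2 \<or> V2 = [] \<or>
         list_all (\<lambda>v. allsel (cpat p q) (cout p q v (vbox V2)) * 250000 \<le> 537289 * Dsc * Dsc) V1) tab) tab"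

lemma vof_vadd: "vof (vadd x y) = vadd (vof x) (vof y)" by (cases x; cases y) auto
lemma vof_vsc: "vof (vsc a x) = vsc (of_int a) (vof x)" by (cases x) auto
lemma vof_vlsum: "vof (vlsum ws) = vlsum (map (\<lambda>(a,u). (of_int a, vof u)) ws)"
  by (induction ws) (auto simp: vof_vadd vof_vsc)
lemma of_int_ind: "of_int (ind b) = ind b" by (simp add: ind_def)
lemma vof_cout: "vof (cout p q v w) = cout p q (vof v) (vof w)"
  by (cases v; cases w) (simp add: Let_def of_int_ind)
lemma of_int_allsel: "of_int (allsel r z) = allsel r (vof z)"
  by (cases z) (simp add: Let_def of_int_ind)
lemma vle_vof: "vle z z' \<Longrightarrow> vle (vof z) (vof z')" by (cases z; cases z') auto
lemma Dr_pos: "0 < Dr" by (simp add: Dr_def)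
lemma of_int_Dsc: "of_int Dsc = Dr" by (simp add: Dsc_def Dr_def)

lemma rv_cout: "cout p q (rv v) (rv w) = vsc (1/Dr^2) (vof (cout p q v w))"
  by (simp add: rv_def cout_sc_l cout_sc_r vsc_vsc vof_cout power2_eq_square)

lemma chk_pair_sound:
  assumes "chk_pair Vr wits p q v w"
  shows "inh (cout p q (rv v) (rv w)) (map rv Vr)"
proof -
  define z where "z = cout p q v w"
  have cz: "cout p q (rv v) (rv w) = vsc (1/Dr^2) (vof z)" by (simp add: z_def rv_cout)
  from assms have "list_ex (\<lambda>u. vle z (vsc Dsc u)) Vr \<or>
     list_ex (\<lambda>(p',q',v',w',ws). p' = p \<and> q' = q \<and> v' = v \<and> w' = w \<and> wvalid Vr z ws) wits"
    by (simp add: chk_pair_def z_def Let_def)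
  then show ?thesis
  proof
    assume "list_ex (\<lambda>u. vle z (vsc Dsc u)) Vr"
    then obtain u where u: "u \<in> set Vr" "vle z (vsc Dsc u)" by (auto simp: list_ex_iff)
    have "vle (vof z) (vsc Dr (vof u))" using vle_vof[OF u(2)] by (simp add: vof_vsc of_int_Dsc)
    then have "vle (vsc (1/Dr^2) (vof z)) (vsc (1/Dr^2) (vsc Dr (vof u)))"
      by (rule vle_sc[rotated]) simp
    also have "vsc (1/Dr^2) (vsc Dr (vof u)) = rv u"
      using Dr_pos by (simp add: vsc_vsc rv_def power2_eq_square)
    finally have le: "vle (vsc (1/Dr^2) (vof z)) (rv u)" .
    show ?thesis unfolding inh_def cone_def cz
      apply (rule exI[of _ "[(1, rv u)]"])
      using u(1) le by (simp add: vsc_one vadd_zero)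
  next
    assume "list_ex (\<lambda>(p',q',v',w',ws). p' = p \<and> q' = q \<and> v' = v \<and> w' = w \<and> wvalid Vr z ws) wits"
    then obtain ws where w: "wvalid Vr z ws" by (auto simp: list_ex_iff)
    define qi where "qi = sum_list (map fst ws)"
    define q where "q = (of_int qi :: real)"
    have qpos: "0 < q" using w by (simp add: wvalid_def q_def qi_def)
    have mem: "\<forall>(a,u)\<in>set ws. 0 \<le> a \<and> u \<in> set Vr" using w by (simp add: wvalid_def list_all_iff)
    have le0: "vle (vsc qi z) (vsc Dsc (vlsum ws))" using w by (simp add: wvalid_def qi_def)
    define wsR where "wsR = map (\<lambda>(a,u). (of_int a :: real, vof u)) ws"
    have le1: "vle (vsc q (vof z)) (vsc Dr (vlsum wsR))"
      using vle_vof[OF le0] by (simp add: vof_vsc vof_vlsum of_int_Dsc q_def wsR_def)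
    define ws' where "ws' = map (\<lambda>(a,u). ((1/q) * a, vsc (1/Dr) u)) wsR"
    have s': "vlsum ws' = vsc ((1/q) * (1/Dr)) (vlsum wsR)" unfolding ws'_def by (rule vlsum_map_sc)
    have sumR: "sum_list (map fst wsR) = q"
      unfolding wsR_def q_def qi_def by (induction ws) auto
    have sum': "sum_list (map fst ws') = 1"
    proof -
      have "sum_list (map fst ws') = (1/q) * sum_list (map fst wsR)"
        unfolding ws'_def by (induction wsR) (auto simp: algebra_simps)
      then show ?thesis using sumR qpos by simp
    qed
    have mem': "\<forall>(a,u)\<in>set ws'. 0 \<le> a \<and> u \<in> set (map rv Vr)"
      using mem qpos by (auto simp: ws'_def wsR_def rv_def)
    have "vle (vsc (1/(q*Dr^2)) (vsc q (vof z))) (vsc (1/(q*Dr^2)) (vsc Dr (vlsum wsR)))"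
      by (rule vle_sc[OF _ le1]) (use qpos Dr_pos in simp)
    moreover have "vsc (1/(q*Dr^2)) (vsc q (vof z)) = vsc (1/Dr^2) (vof z)"
      using qpos by (simp add: vsc_vsc)
    moreover have "vsc (1/(q*Dr^2)) (vsc Dr (vlsum wsR)) = vlsum ws'"
      using Dr_pos by (simp add: vsc_vsc s' power2_eq_square)
    ultimately have "vle (vsc (1/Dr^2) (vof z)) (vlsum ws')" by simp
    then show ?thesis unfolding inh_def cone_def cz
      using mem' sum' by blast
  qed
qed

section \<open>Certificate data\<close>

definition ctable :: "(nat \<times> pat \<times> (int \<times> int \<times> int) list) list" where
 "ctable = [
  (0, ((Some (1)), None), [(100000, 68213, 0)]),
  (1, ((Some (1)), (Some (1))), [(139593, 31741, 31741), (129910, 44308, 14770), (108258, 14770, 44308), (130974, 41235, 20618), (120897, 20618, 41234)]),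
  (1, ((Some (1)), (Some (0))), [(139593, 31741, 46531), (129909, 29539, 64954), (130972, 20618, 90671), (100749, 27490, 90671), (58900, 13393, 176683)]),
  (1, ((Some (1)), None), [(100000, 68213, 0)]),
  (1, ((Some (0)), (Some (1))), [(68213, 68213, 46531), (63482, 95221, 21652), (44309, 132922, 10076)]),
  (1, ((Some (0)), (Some (0))), [(46531, 46531, 46531), (21652, 64954, 21652), (30225, 60448, 30224), (21652, 43303, 64954), (14065, 56256, 42191), (10076, 30225, 90671)]),
  (2, ((Some (1)), (Some (1))), [(139593, 31741, 31741), (129910, 44308, 14770), (194863, 14770, 29539), (181346, 20618, 27490), (108258, 14770, 44308), (130974, 41235, 20618), (168767, 28781, 19188), (120897, 20618, 41234)]),
  (2, ((Some (1)), (Some (0))), [(139593, 31741, 46531), (194863, 14770, 43303), (129909, 29539, 64954), (130972, 20618, 90671), (182828, 9594, 56255), (100749, 27490, 90671), (58900, 13393, 176683)]),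
  (2, ((Some (1)), None), [(100000, 68213, 0)]),
  (2, ((Some (0)), (Some (1))), [(68213, 68213, 46531), (95221, 31741, 21652), (88616, 44308, 30225), (63482, 95221, 21652), (44309, 132922, 10076), (82470, 61851, 14065)]),
  (2, ((Some (0)), (Some (0))), [(46531, 46531, 46531), (64955, 21652, 43303), (21652, 64954, 21652), (60449, 30225, 40300), (21652, 43303, 64954), (30225, 60448, 30224), (10076, 30225, 90671), (14065, 56256, 42191)]),
  (2, ((Some (-1)), (Some (0))), [(46531, 68213, 93062), (43303, 95221, 86606), (40300, 132922, 60449), (30225, 132922, 100747), (19633, 259016, 39267)]),
  (2, ((Some (-1)), (Some (-1))), [(21652, 31741, 63481), (4689, 61850, 41235), (4689, 41235, 75595), (6545, 57560, 47967), (3046, 53568, 58032), (9136, 53567, 53567), (2182, 28781, 95932), (1979, 46395, 69590)])]"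

definition cwits :: "(pat \<times> pat \<times> (int \<times> int \<times> int) \<times> (int \<times> int \<times> int) \<times> (int \<times> (int \<times> int \<times> int)) list) list" where
 "cwits = [
  (((Some (1)), None), ((Some (1)), (Some (1))), (100000, 68213, 0), (129910, 44308, 14770), [(12335043230242, (68213, 68213, 46531)), (15572406339557, (63482, 95221, 21652)), (3358478980201, (44309, 132922, 10076))]),
  (((Some (1)), None), ((Some (1)), (Some (1))), (100000, 68213, 0), (181346, 20618, 27490), [(2181075900741, (68213, 68213, 46531)), (3903100311952, (63482, 95221, 21652)), (25181752337307, (44309, 132922, 10076))]),
  (((Some (1)), None), ((Some (1)), (Some (1))), (100000, 68213, 0), (130974, 41235, 20618), [(17607427788667, (68213, 68213, 46531)), (42063165336795, (63482, 95221, 21652)), (2861263974538, (44309, 132922, 10076))]),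
  (((Some (1)), None), ((Some (1)), (Some (1))), (100000, 68213, 0), (168767, 28781, 19188), [(15422122969149, (68213, 68213, 46531)), (3055020425918, (63482, 95221, 21652)), (44054713704933, (44309, 132922, 10076))]),
  (((Some (1)), (Some (1))), ((Some (1)), (Some (1))), (139593, 31741, 31741), (139593, 31741, 31741), [(55481520, (95221, 31741, 21652)), (41606948537, (88616, 44308, 30225)), (13869943, (63482, 95221, 21652))]),
  (((Some (1)), (Some (1))), ((Some (1)), (Some (1))), (129910, 44308, 14770), (129910, 44308, 14770), [(1181250331458, (68213, 68213, 46531)), (26611802280253, (95221, 31741, 21652)), (8950472025789, (44309, 132922, 10076))]),
  (((Some (1)), (Some (1))), ((Some (1)), (Some (1))), (129910, 44308, 14770), (130974, 41235, 20618), [(7091202564767, (95221, 31741, 21652)), (2441241283276, (44309, 132922, 10076)), (945228326957, (82470, 61851, 14065))]),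
  (((Some (1)), (Some (1))), ((Some (1)), (Some (1))), (130974, 41235, 20618), (139593, 31741, 31741), [(16872867, (95221, 31741, 21652)), (301902133, (82470, 61851, 14065))]),
  (((Some (1)), (Some (1))), ((Some (1)), (Some (1))), (130974, 41235, 20618), (129910, 44308, 14770), [(2658429161963, (95221, 31741, 21652)), (637845349675, (44309, 132922, 10076)), (894794358362, (82470, 61851, 14065))]),
  (((Some (1)), (Some (1))), ((Some (1)), (Some (1))), (130974, 41235, 20618), (130974, 41235, 20618), [(3550706476837, (95221, 31741, 21652)), (579186504236, (44309, 132922, 10076)), (4252244758927, (82470, 61851, 14065))]),
  (((Some (1)), (Some (1))), ((Some (1)), None), (130974, 41235, 20618), (100000, 68213, 0), [(48427420551096235, (68213, 68213, 46531)), (196470821759150539, (95221, 31741, 21652)), (181702953615003800, (88616, 44308, 30225)), (8258691049426, (63482, 95221, 21652))]),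
  (((Some (1)), (Some (1))), ((Some (0)), (Some (1))), (139593, 31741, 31741), (63482, 95221, 21652), [(4029708077, (64955, 21652, 43303)), (707091923, (10076, 30225, 90671))]),
  (((Some (1)), (Some (1))), ((Some (0)), (Some (1))), (129910, 44308, 14770), (63482, 95221, 21652), [(4665011861153, (64955, 21652, 43303)), (1221507606196, (10076, 30225, 90671)), (982878232651, (14065, 56256, 42191))]),
  (((Some (1)), (Some (1))), ((Some (0)), (Some (1))), (129910, 44308, 14770), (44309, 132922, 10076), [(1261574047, (21652, 43303, 64954)), (24275953, (10076, 30225, 90671))]),
  (((Some (1)), (Some (1))), ((Some (0)), (Some (1))), (108258, 14770, 44308), (95221, 31741, 21652), [(903766681, (46531, 46531, 46531)), (17383319, (21652, 43303, 64954))]),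
  (((Some (1)), (Some (1))), ((Some (0)), (Some (1))), (130974, 41235, 20618), (68213, 68213, 46531), [(7919059952518330, (46531, 46531, 46531)), (35879460941071019, (64955, 21652, 43303)), (306352722295548, (21652, 64954, 21652)), (35913028508815103, (60449, 30225, 40300))]),
  (((Some (1)), (Some (1))), ((Some (0)), (Some (1))), (130974, 41235, 20618), (63482, 95221, 21652), [(119370990920259, (64955, 21652, 43303)), (31820117560084, (10076, 30225, 90671)), (13674436319657, (14065, 56256, 42191))]),
  (((Some (1)), (Some (1))), ((Some (0)), (Some (0))), (139593, 31741, 31741), (60449, 30225, 40300), [(794488694983137, (139593, 31741, 31741)), (319658681526593, (129910, 44308, 14770)), (4374543569480527, (194863, 14770, 29539)), (921700016509743, (181346, 20618, 27490))]),
  (((Some (1)), (Some (1))), ((Some (0)), (Some (0))), (129910, 44308, 14770), (21652, 64954, 21652), [(2948178026581, (139593, 31741, 31741)), (102764124669, (194863, 14770, 29539)), (76949948750, (108258, 14770, 44308))]),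
  (((Some (1)), (Some (1))), ((Some (0)), (Some (0))), (129910, 44308, 14770), (60449, 30225, 40300), [(20524073223411, (139593, 31741, 31741)), (3315203462039272, (129910, 44308, 14770)), (5715940889913878, (194863, 14770, 29539)), (5243002342373439, (168767, 28781, 19188))]),
  (((Some (1)), (Some (1))), ((Some (0)), (Some (0))), (129910, 44308, 14770), (30225, 60448, 30224), [(341987539840, (139593, 31741, 31741)), (170009131029, (194863, 14770, 29539)), (9318679131, (108258, 14770, 44308))]),
  (((Some (1)), (Some (1))), ((Some (0)), (Some (0))), (108258, 14770, 44308), (64955, 21652, 43303), [(736996540466, (139593, 31741, 31741)), (25708386057, (194863, 14770, 29539)), (19268098477, (108258, 14770, 44308))]),
  (((Some (1)), (Some (1))), ((Some (0)), (Some (0))), (108258, 14770, 44308), (60449, 30225, 40300), [(44742034252989, (139593, 31741, 31741)), (1120602122338, (129910, 44308, 14770)), (2102820424673, (194863, 14770, 29539))]),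
  (((Some (1)), (Some (1))), ((Some (0)), (Some (0))), (130974, 41235, 20618), (46531, 46531, 46531), [(3178377941076954, (139593, 31741, 31741)), (1279621821659831, (129910, 44308, 14770)), (17503237568160334, (194863, 14770, 29539)), (3680326519102881, (181346, 20618, 27490))]),
  (((Some (1)), (Some (1))), ((Some (0)), (Some (0))), (130974, 41235, 20618), (64955, 21652, 43303), [(5024387592243, (139593, 31741, 31741)), (1333181748189922, (129910, 44308, 14770)), (2293387874143049, (194863, 14770, 29539)), (2086274297094786, (168767, 28781, 19188))]),
  (((Some (1)), (Some (1))), ((Some (0)), (Some (0))), (130974, 41235, 20618), (21652, 64954, 21652), [(44742085695765, (139593, 31741, 31741)), (1120558348498, (129910, 44308, 14770)), (2102812755737, (194863, 14770, 29539))]),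
  (((Some (1)), (Some (1))), ((Some (0)), (Some (0))), (130974, 41235, 20618), (60449, 30225, 40300), [(25344331924763844, (139593, 31741, 31741)), (209031750674502247, (129910, 44308, 14770)), (413753541882826832, (194863, 14770, 29539)), (2166172887307077, (108258, 14770, 44308))]),
  (((Some (1)), (Some (1))), ((Some (0)), (Some (0))), (130974, 41235, 20618), (30225, 60448, 30224), [(262619911184, (139593, 31741, 31741)), (142997375013, (194863, 14770, 29539)), (5947463803, (108258, 14770, 44308))]),
  (((Some (1)), (Some (1))), ((Some (0)), (Some (0))), (120897, 20618, 41234), (64955, 21652, 43303), [(2051829228737, (139593, 31741, 31741)), (1020089524155, (194863, 14770, 29539)), (55973347108, (108258, 14770, 44308))]),
  (((Some (1)), (Some (1))), ((Some (0)), (Some (0))), (120897, 20618, 41234), (60449, 30225, 40300), [(6653315088073, (139593, 31741, 31741)), (3622499821881, (194863, 14770, 29539)), (150492090046, (108258, 14770, 44308))]),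
  (((Some (1)), (Some (1))), ((Some (-1)), (Some (0))), (130974, 41235, 20618), (46531, 68213, 93062), [(6851376841779, (139593, 31741, 31741)), (3992783777072, (129910, 44308, 14770)), (42180629081149, (194863, 14770, 29539))]),
  (((Some (1)), (Some (0))), ((Some (1)), (Some (1))), (139593, 31741, 46531), (139593, 31741, 31741), [(55481520, (95221, 31741, 21652)), (41606948537, (88616, 44308, 30225)), (13869943, (63482, 95221, 21652))]),
  (((Some (1)), (Some (0))), ((Some (0)), (Some (0))), (139593, 31741, 46531), (60449, 30225, 40300), [(6850992060207, (139593, 31741, 31741)), (3993111196552, (129910, 44308, 14770)), (42180686443241, (194863, 14770, 29539))]),
  (((Some (1)), (Some (0))), ((Some (-1)), (Some (0))), (139593, 31741, 46531), (43303, 95221, 86606), [(233181533500, (139593, 31741, 46531)), (898969988321, (194863, 14770, 43303)), (1233013678179, (182828, 9594, 56255))]),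
  (((Some (1)), (Some (0))), ((Some (-1)), (Some (0))), (139593, 31741, 46531), (40300, 132922, 60449), [(1307857518504, (139593, 31741, 46531)), (38758054383999, (182828, 9594, 56255)), (6745680897497, (100749, 27490, 90671))]),
  (((Some (1)), (Some (0))), ((Some (-1)), (Some (0))), (139593, 31741, 46531), (19633, 259016, 39267), [(8533330021, (100749, 27490, 90671)), (67869979, (58900, 13393, 176683))]),
  (((Some (1)), (Some (0))), ((Some (-1)), (Some (0))), (129909, 29539, 64954), (46531, 68213, 93062), [(2331677855024, (139593, 31741, 46531)), (8990228087677, (194863, 14770, 43303)), (12329746057299, (182828, 9594, 56255))]),
  (((Some (1)), (Some (0))), ((Some (-1)), (Some (0))), (129909, 29539, 64954), (43303, 95221, 86606), [(1572125349528, (139593, 31741, 46531)), (11358670446027, (182828, 9594, 56255)), (443945004445, (100749, 27490, 90671))]),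
  (((Some (1)), (Some (0))), ((Some (-1)), (Some (0))), (129909, 29539, 64954), (30225, 132922, 100747), [(7488935450896, (129909, 29539, 64954)), (735847380951, (130972, 20618, 90671)), (26029341168153, (182828, 9594, 56255))]),
  (((Some (1)), (Some (0))), ((Some (-1)), (Some (0))), (130972, 20618, 90671), (43303, 95221, 86606), [(29957023528336, (129909, 29539, 64954)), (2942081524881, (130972, 20618, 90671)), (104117390946783, (182828, 9594, 56255))]),
  (((Some (1)), (Some (0))), ((Some (-1)), (Some (0))), (130972, 20618, 90671), (40300, 132922, 60449), [(64670163091366, (139593, 31741, 46531)), (5136582662223, (182828, 9594, 56255)), (10340509896411, (58900, 13393, 176683))]),
  (((Some (1)), (Some (0))), ((Some (-1)), (Some (0))), (100749, 27490, 90671), (46531, 68213, 93062), [(2616440570824, (139593, 31741, 46531)), (77517594743979, (182828, 9594, 56255)), (13489150285197, (100749, 27490, 90671))]),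
  (((Some (1)), (Some (0))), ((Some (-1)), (Some (0))), (100749, 27490, 90671), (30225, 132922, 100747), [(517370021950376, (139593, 31741, 46531)), (41086985271471, (182828, 9594, 56255)), (82721037978153, (58900, 13393, 176683))]),
  (((Some (1)), (Some (0))), ((Some (-1)), (Some (0))), (58900, 13393, 176683), (46531, 68213, 93062), [(4266743309, (100749, 27490, 90671)), (33856691, (58900, 13393, 176683))]),
  (((Some (1)), None), ((Some (1)), (Some (1))), (100000, 68213, 0), (129910, 44308, 14770), [(76284211341202, (68213, 68213, 46531)), (15572406339557, (95221, 31741, 21652)), (55117480869241, (44309, 132922, 10076))]),
  (((Some (1)), None), ((Some (1)), (Some (1))), (100000, 68213, 0), (181346, 20618, 27490), [(33890783873028081, (68213, 68213, 46531)), (8191318050918560, (95221, 31741, 21652)), (4916928811620272, (63482, 95221, 21652)), (300838283929983087, (44309, 132922, 10076))]),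
  (((Some (1)), None), ((Some (1)), (Some (1))), (100000, 68213, 0), (130974, 41235, 20618), [(132199178520067, (68213, 68213, 46531)), (42063165336795, (95221, 31741, 21652)), (119685853243138, (44309, 132922, 10076))]),
  (((Some (1)), None), ((Some (1)), (Some (1))), (100000, 68213, 0), (168767, 28781, 19188), [(76086045617589, (68213, 68213, 46531)), (3055020425918, (95221, 31741, 21652)), (214807131056493, (44309, 132922, 10076))]),
  (((Some (0)), (Some (1))), ((Some (1)), (Some (1))), (68213, 68213, 46531), (129910, 44308, 14770), [(44636575063165, (46531, 68213, 93062)), (7785809412106, (40300, 132922, 60449)), (12768697574729, (30225, 132922, 100747))]),
  (((Some (0)), (Some (1))), ((Some (1)), (Some (1))), (68213, 68213, 46531), (181346, 20618, 27490), [(18578290789998, (46531, 68213, 93062)), (3900958512445, (40300, 132922, 60449)), (107902914797557, (30225, 132922, 100747))]),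
  (((Some (0)), (Some (1))), ((Some (1)), (Some (1))), (68213, 68213, 46531), (130974, 41235, 20618), [(175621526540324, (46531, 68213, 93062)), (42061534276929, (40300, 132922, 60449)), (43081267382747, (30225, 132922, 100747))]),
  (((Some (0)), (Some (1))), ((Some (1)), (Some (1))), (68213, 68213, 46531), (168767, 28781, 19188), [(15424211117319, (46531, 68213, 93062)), (3051399224465, (43303, 95221, 86606)), (44056168058216, (30225, 132922, 100747))]),
  (((Some (0)), (Some (1))), ((Some (1)), (Some (1))), (63482, 95221, 21652), (129910, 44308, 14770), [(18578181743610, (46531, 68213, 93062)), (94906518885629, (40300, 132922, 60449)), (16897463470761, (30225, 132922, 100747))]),
  (((Some (0)), (Some (1))), ((Some (1)), (Some (1))), (63482, 95221, 21652), (194863, 14770, 29539), [(118723173488218, (40300, 132922, 60449)), (29302468043055, (30225, 132922, 100747)), (106041159068727, (19633, 259016, 39267))]),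
  (((Some (0)), (Some (1))), ((Some (1)), (Some (1))), (63482, 95221, 21652), (181346, 20618, 27490), [(70816396943585, (40300, 132922, 60449)), (16163335510198, (30225, 132922, 100747)), (40053667846217, (19633, 259016, 39267))]),
  (((Some (0)), (Some (1))), ((Some (1)), (Some (1))), (63482, 95221, 21652), (130974, 41235, 20618), [(33073565814308, (46531, 68213, 93062)), (208035664244043, (40300, 132922, 60449)), (19655098141649, (30225, 132922, 100747))]),
  (((Some (0)), (Some (1))), ((Some (1)), (Some (1))), (63482, 95221, 21652), (168767, 28781, 19188), [(146618475441625, (40300, 132922, 60449)), (51475158604832, (30225, 132922, 100747)), (55973166553543, (19633, 259016, 39267))]),
  (((Some (0)), (Some (1))), ((Some (1)), (Some (1))), (44309, 132922, 10076), (139593, 31741, 31741), [(59361750896635, (40300, 132922, 60449)), (14651764777788, (30225, 132922, 100747)), (53019884625577, (19633, 259016, 39267))]),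
  (((Some (0)), (Some (1))), ((Some (1)), (Some (1))), (44309, 132922, 10076), (129910, 44308, 14770), [(14781011080952, (40300, 132922, 60449)), (28709109255053, (30225, 132922, 100747)), (20026579813995, (19633, 259016, 39267))]),
  (((Some (0)), (Some (1))), ((Some (1)), (Some (1))), (44309, 132922, 10076), (181346, 20618, 27490), [(3702546198699, (40300, 132922, 60449)), (5348016821604, (30225, 132922, 100747)), (54466137129697, (19633, 259016, 39267))]),
  (((Some (0)), (Some (1))), ((Some (1)), (Some (1))), (44309, 132922, 10076), (108258, 14770, 44308), [(109064517, (46531, 68213, 93062)), (339235483, (19633, 259016, 39267))]),
  (((Some (0)), (Some (1))), ((Some (1)), (Some (1))), (44309, 132922, 10076), (130974, 41235, 20618), [(39926681320331, (40300, 132922, 60449)), (45628732810583, (30225, 132922, 100747)), (41477986169086, (19633, 259016, 39267))]),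
  (((Some (0)), (Some (1))), ((Some (1)), (Some (1))), (44309, 132922, 10076), (168767, 28781, 19188), [(2895276681831, (46531, 68213, 93062)), (29643352639413, (30225, 132922, 100747)), (91144913428756, (19633, 259016, 39267))]),
  (((Some (0)), (Some (1))), ((Some (1)), (Some (1))), (44309, 132922, 10076), (120897, 20618, 41234), [(194325067, (40300, 132922, 60449)), (322349933, (19633, 259016, 39267))]),
  (((Some (0)), (Some (1))), ((Some (1)), (Some (0))), (63482, 95221, 21652), (194863, 14770, 43303), [(58604936086110, (46531, 68213, 93062)), (71054774470877, (40300, 132922, 60449)), (144504047843013, (19633, 259016, 39267))]),
  (((Some (0)), (Some (1))), ((Some (1)), (Some (0))), (63482, 95221, 21652), (182828, 9594, 56255), [(94544213, (40300, 132922, 60449)), (117275787, (19633, 259016, 39267))]),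
  (((Some (0)), (Some (1))), ((Some (1)), (Some (0))), (44309, 132922, 10076), (139593, 31741, 46531), [(7325882388894, (46531, 68213, 93062)), (8881632713015, (40300, 132922, 60449)), (18062954698091, (19633, 259016, 39267))]),
  (((Some (0)), (Some (1))), ((Some (1)), (Some (0))), (44309, 132922, 10076), (129909, 29539, 64954), [(654323021, (40300, 132922, 60449)), (404776979, (19633, 259016, 39267))]),
  (((Some (0)), (Some (1))), ((Some (1)), (Some (0))), (44309, 132922, 10076), (130972, 20618, 90671), [(33389917, (40300, 132922, 60449)), (496160083, (19633, 259016, 39267))]),
  (((Some (0)), (Some (1))), ((Some (1)), (Some (0))), (44309, 132922, 10076), (100749, 27490, 90671), [(11601136, (40300, 132922, 60449)), (21495739, (19633, 259016, 39267))]),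
  (((Some (0)), (Some (1))), ((Some (0)), (Some (0))), (68213, 68213, 46531), (60449, 30225, 40300), [(48452769581828628, (68213, 68213, 46531)), (196529489048968072, (95221, 31741, 21652)), (181624097588270545, (88616, 44308, 30225)), (3098397232755, (63482, 95221, 21652))]),
  (((Some (0)), (Some (1))), ((Some (0)), (Some (0))), (63482, 95221, 21652), (46531, 46531, 46531), [(126524724, (95221, 31741, 21652)), (680564724377, (88616, 44308, 30225)), (21650899, (63482, 95221, 21652))]),
  (((Some (0)), (Some (1))), ((Some (0)), (Some (0))), (63482, 95221, 21652), (60449, 30225, 40300), [(16872867, (95221, 31741, 21652)), (301902133, (82470, 61851, 14065))]),
  (((Some (0)), (Some (1))), ((Some (-1)), (Some (0))), (63482, 95221, 21652), (46531, 68213, 93062), [(126524724, (95221, 31741, 21652)), (680564724377, (88616, 44308, 30225)), (21650899, (63482, 95221, 21652))]),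
  (((Some (0)), (Some (0))), ((Some (0)), (Some (1))), (46531, 46531, 46531), (95221, 31741, 21652), [(36952717610635, (21652, 31741, 63481)), (39475170331421, (4689, 61850, 41235)), (14694011957944, (2182, 28781, 95932))]),
  (((Some (0)), (Some (0))), ((Some (0)), (Some (1))), (46531, 46531, 46531), (88616, 44308, 30225), [(25306161983073920, (21652, 31741, 63481)), (9741955399270043, (4689, 41235, 75595)), (4728468582184764, (6545, 57560, 47967)), (13218191601571273, (9136, 53567, 53567))]),
  (((Some (0)), (Some (0))), ((Some (0)), (Some (1))), (46531, 46531, 46531), (63482, 95221, 21652), [(2208590707, (21652, 31741, 63481)), (1036509293, (2182, 28781, 95932))]),
  (((Some (0)), (Some (0))), ((Some (0)), (Some (1))), (46531, 46531, 46531), (44309, 132922, 10076), [(10334017636259, (21652, 31741, 63481)), (18081935781774, (4689, 61850, 41235)), (69943639881967, (2182, 28781, 95932))]),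
  (((Some (0)), (Some (0))), ((Some (0)), (Some (1))), (46531, 46531, 46531), (82470, 61851, 14065), [(42694488341591, (21652, 31741, 63481)), (22612333093030, (4689, 61850, 41235)), (25815078465379, (2182, 28781, 95932))]),
  (((Some (0)), (Some (0))), ((Some (0)), (Some (1))), (21652, 64954, 21652), (68213, 68213, 46531), [(18477164448912, (21652, 31741, 63481)), (19737221671491, (4689, 61850, 41235)), (7346563829597, (2182, 28781, 95932))]),
  (((Some (0)), (Some (0))), ((Some (0)), (Some (1))), (30225, 60448, 30224), (68213, 68213, 46531), [(25310206385973830, (21652, 31741, 63481)), (9742847781401567, (4689, 41235, 75595)), (4746473724352416, (6545, 57560, 47967)), (13195249674372187, (9136, 53567, 53567))]),
  (((Some (0)), (Some (0))), ((Some (0)), (Some (1))), (30225, 60448, 30224), (63482, 95221, 21652), [(361576364738686, (21652, 31741, 63481)), (1931308845668833, (4689, 41235, 75595)), (105816923099881, (9136, 53567, 53567)), (493690597417600, (2182, 28781, 95932))]),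
  (((Some (0)), (Some (0))), ((Some (0)), (Some (1))), (30225, 60448, 30224), (44309, 132922, 10076), [(1043388514651, (21652, 31741, 63481)), (366130720515, (4689, 61850, 41235)), (23180379089834, (2182, 28781, 95932))]),
  (((Some (0)), (Some (0))), ((Some (0)), (Some (1))), (30225, 60448, 30224), (82470, 61851, 14065), [(1191102984084811, (21652, 31741, 63481)), (11667688824209435, (4689, 41235, 75595)), (2870526397764796, (6545, 57560, 47967)), (26900899268240958, (3046, 53568, 58032))]),
  (((Some (0)), (Some (0))), ((Some (0)), (Some (1))), (21652, 43303, 64954), (68213, 68213, 46531), [(25386957, (21652, 31741, 63481)), (11913043, (2182, 28781, 95932))]),
  (((Some (0)), (Some (0))), ((Some (0)), (Some (1))), (21652, 43303, 64954), (88616, 44308, 30225), [(361566050562088, (21652, 31741, 63481)), (1930939078544119, (4689, 41235, 75595)), (105979106476358, (9136, 53567, 53567)), (493908495342435, (2182, 28781, 95932))]),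
  (((Some (0)), (Some (0))), ((Some (0)), (Some (1))), (21652, 43303, 64954), (63482, 95221, 21652), [(1346435209, (21652, 31741, 63481)), (1898664791, (2182, 28781, 95932))]),
  (((Some (0)), (Some (0))), ((Some (0)), (Some (1))), (21652, 43303, 64954), (82470, 61851, 14065), [(13614728153153, (21652, 31741, 63481)), (17879731592590, (4689, 61850, 41235)), (59627440154257, (2182, 28781, 95932))]),
  (((Some (0)), (Some (0))), ((Some (0)), (Some (1))), (14065, 56256, 42191), (68213, 68213, 46531), [(42696804627425, (21652, 31741, 63481)), (22611545948688, (4689, 61850, 41235)), (25813549323887, (2182, 28781, 95932))]),
  (((Some (0)), (Some (0))), ((Some (0)), (Some (1))), (14065, 56256, 42191), (88616, 44308, 30225), [(1186077176891811, (21652, 31741, 63481)), (11681864810666611, (4689, 41235, 75595)), (2890594709534964, (6545, 57560, 47967)), (26871680777206614, (3046, 53568, 58032))]),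
  (((Some (0)), (Some (0))), ((Some (0)), (Some (1))), (14065, 56256, 42191), (63482, 95221, 21652), [(6805614620377, (21652, 31741, 63481)), (8940642131136, (4689, 61850, 41235)), (29814693198487, (2182, 28781, 95932))]),
  (((Some (0)), (Some (0))), ((Some (0)), (Some (1))), (10076, 30225, 90671), (68213, 68213, 46531), [(2583468801517, (21652, 31741, 63481)), (4520760482721, (4689, 61850, 41235)), (17485669040762, (2182, 28781, 95932))]),
  (((Some (0)), (Some (0))), ((Some (0)), (Some (1))), (10076, 30225, 90671), (88616, 44308, 30225), [(1043417573288, (21652, 31741, 63481)), (365905043745, (4689, 61850, 41235)), (23180575707967, (2182, 28781, 95932))]),
  (((Some (0)), (Some (0))), ((Some (0)), (Some (0))), (46531, 46531, 46531), (60449, 30225, 40300), [(23752115328922517, (46531, 46531, 46531)), (107639714938076913, (64955, 21652, 43303)), (921029727035194, (21652, 64954, 21652)), (107740846380065376, (60449, 30225, 40300))]),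
  (((Some (0)), (Some (0))), ((Some (0)), (Some (0))), (21652, 64954, 21652), (21652, 64954, 21652), [(90378439, (46531, 46531, 46531)), (1736561, (21652, 43303, 64954))]),
  (((Some (0)), (Some (0))), ((Some (0)), (Some (0))), (21652, 43303, 64954), (46531, 46531, 46531), [(4029793533, (64955, 21652, 43303)), (707006467, (10076, 30225, 90671))]),
  (((Some (0)), (Some (0))), ((Some (0)), (Some (0))), (21652, 43303, 64954), (64955, 21652, 43303), [(1696377346309, (64955, 21652, 43303)), (444185614424, (10076, 30225, 90671)), (357399839267, (14065, 56256, 42191))]),
  (((Some (0)), (Some (0))), ((Some (0)), (Some (0))), (21652, 43303, 64954), (60449, 30225, 40300), [(119375646872289, (64955, 21652, 43303)), (31817552404948, (10076, 30225, 90671)), (13672345522763, (14065, 56256, 42191))]),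
  (((Some (0)), (Some (0))), ((Some (0)), (Some (0))), (10076, 30225, 90671), (64955, 21652, 43303), [(504626699, (21652, 43303, 64954)), (9713301, (10076, 30225, 90671))])]"

definition Inv :: "nat \<Rightarrow> st3 \<Rightarrow> bool" where
  "Inv k S = (good S \<and> (\<exists>(k',p,V)\<in>set ctable. k' = k \<and> patS S = p \<and> inh (xS S) (map rv V)))"

lemma vnn_xS: "vnn (xS S)" by (simp add: vnn_def xS_def xv_nonneg)

lemma Inv_step:
  assumes chk: "chk_class ctable cwits k" and I1: "Inv (k-1) S" and I2: "Inv 2 T"
  shows "Inv k (combine S T)"
proof -
  obtain p V1 where e1: "(k-1, p, V1) \<in> set ctable" "patS S = p" "inh (xS S) (map rv V1)" and gS: "good S"
    using I1 by (auto simp: Inv_def)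
  obtain q V2 where e2: "(2, q, V2) \<in> set ctable" "patS T = q" "inh (xS T) (map rv V2)" and gT: "good T"
    using I2 by (auto simp: Inv_def)
  from chk e1(1) e2(1) obtain Vr where r: "(k, cpat p q, Vr) \<in> set ctable"
      "\<forall>v\<in>set V1. \<forall>w\<in>set V2. chk_pair Vr cwits p q v w"
    unfolding chk_class_def list_all_iff list_ex_iff by fastforce
  have pairs: "\<forall>v\<in>set (map rv V1). \<forall>w\<in>set (map rv V2). inh (cout p q v w) (map rv Vr)"
  proof (intro ballI)
    fix v w assume v: "v \<in> set (map rv V1)" and w: "w \<in> set (map rv V2)"
    from v obtain v' where v': "v = rv v'" "v' \<in> set V1" unfolding set_map by (rule imageE)
    from w obtain w' where w': "w = rv w'" "w' \<in> set V2" unfolding set_map by (rule imageE)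
    have "chk_pair Vr cwits p q v' w'" using r(2) v'(2) w'(2) by blast
    then show "inh (cout p q v w) (map rv Vr)" unfolding v'(1) w'(1) by (rule chk_pair_sound)
  qed
  have "inh (cout p q (xS S) (xS T)) (map rv Vr)"
    by (rule hull_closed[OF e1(3) e2(3) vnn_xS vnn_xS pairs])
  then show ?thesis
    using combine_good[OF gS gT] combine_pat_x[OF gS gT] e1(2) e2(2) r(1)
    unfolding Inv_def by fastforce
qed

lemma allsel_mono: "vle x y \<Longrightarrow> allsel r x \<le> allsel r (y::real vec3)"
  by (cases x; cases y) (auto simp: Let_def ind_def intro!: add_mono)

lemma allsel_add: "allsel r (vadd x y) = allsel r x + allsel r (y::real vec3)"
  by (cases x; cases y) (simp add: Let_def algebra_simps)
lemma allsel_sc: "allsel r (vsc a x) = a * allsel r (x::real vec3)"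
  by (cases x) (simp add: Let_def algebra_simps)
lemma allsel_vlsum: "allsel r (vlsum ws) = sum_list (map (\<lambda>(a,u). a * allsel r u) (ws :: (real \<times> real vec3) list))"
proof (induction ws)
  case Nil then show ?case by (simp add: Let_def)
next
  case (Cons w ws)
  obtain a u where w: "w = (a,u)" by (cases w) auto
  show ?case by (simp only: w vlsum_Cons allsel_add allsel_sc Cons.IH list.map prod.case sum_list.Cons)
qed

lemma vlsum_le_box:
  assumes "\<forall>(a,u)\<in>set ws. 0 \<le> a \<and> vle u B"
  shows "vle (vlsum ws) (vsc (sum_list (map fst ws)) (B::real vec3))"
  using assms
proof (induction ws)
  case Nil then show ?case by (cases B) simp
next
  case (Cons w ws)
  obtain a u where w: "w = (a,u)" by (cases w) auto
  have "vle (vsc a u) (vsc a B)" using Cons.prems w by (auto intro: vle_sc)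
  moreover have "vle (vlsum ws) (vsc (sum_list (map fst ws)) B)" using Cons by auto
  ultimately have "vle (vadd (vsc a u) (vlsum ws)) (vadd (vsc a B) (vsc (sum_list (map fst ws)) B))"
    by (rule vle_add)
  then show ?case by (cases B) (simp add: w algebra_simps)
qed

lemma vbox_ge:
  assumes "u \<in> set V" shows "vle u (vbox V)"
proof -
  have "fst u \<le> Max (set (map fst V))" using assms by (intro Max_ge) auto
  moreover have "fst (snd u) \<le> Max (set (map (fst o snd) V))" using assms by (intro Max_ge) auto
  moreover have "snd (snd u) \<le> Max (set (map (snd o snd) V))" using assms by (intro Max_ge) auto
  ultimately show ?thesis by (cases u) (simp add: vbox_def)
qed

lemma rv_mono: "vle u v \<Longrightarrow> vle (rv u) (rv v)"
  unfolding rv_def by (rule vle_sc) (auto simp: Dr_def intro: vle_vof)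

lemma inh_box:
  assumes "inh y (map rv V)" shows "vle y (rv (vbox V))"
proof -
  obtain ws where 1: "\<forall>(a,u)\<in>set ws. 0 \<le> a \<and> u \<in> set (map rv V)" "sum_list (map fst ws) = 1" "vle y (vlsum ws)"
    using assms by (auto simp: inh_def cone_def)
  have "\<forall>w\<in>set ws. case w of (a,u) \<Rightarrow> 0 \<le> a \<and> vle u (rv (vbox V))"
  proof
    fix w assume w: "w \<in> set ws"
    obtain a u where au: "w = (a,u)" by (cases w) auto
    have h: "0 \<le> a \<and> u \<in> set (map rv V)" using 1(1) w au by blast
    then obtain v where "v \<in> set V" "u = rv v" by auto
    then show "case w of (a,u) \<Rightarrow> 0 \<le> a \<and> vle u (rv (vbox V))"
      using au h by (simp add: rv_mono vbox_ge)
  qed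
  from vlsum_le_box[OF this] 1 show ?thesis by (auto simp: vsc_one intro: vle_trans)
qed

lemma sum_list_bound:
  assumes "\<forall>(a,u)\<in>set ws. 0 \<le> a \<and> f u \<le> (C::real)"
  shows "sum_list (map (\<lambda>(a,u). a * f u) ws) \<le> sum_list (map fst ws) * C"
  using assms
proof (induction ws)
  case Nil then show ?case by simp
next
  case (Cons w ws)
  obtain a u where w: "w = (a,u)" by (cases w) auto
  have "a * f u \<le> a * C" using Cons.prems w by (auto intro: mult_left_mono)
  then show ?case using Cons by (auto simp: w algebra_simps)
qed

lemma sum_map_pair: "sum_list (map (\<lambda>(a,u). a * f u) (map (\<lambda>(a,u). (a, g u)) ws))
   = sum_list (map (\<lambda>(a,u). (a::real) * f (g u)) ws)"
  by (induction ws) auto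

lemma cc2: "cc^2 = 537289 / 250000" by (simp add: cc_def power2_eq_square)

lemma Inv_final:
  assumes chk: "chk_final ctable" and I1: "Inv 2 S" and I2: "Inv 2 T"
  shows "xv (allst (combine S T)) \<le> cc^2"
proof -
  obtain p V1 where e1: "(2, p, V1) \<in> set ctable" "patS S = p" "inh (xS S) (map rv V1)" and gS: "good S"
    using I1 by (auto simp: Inv_def)
  obtain q V2 where e2: "(2, q, V2) \<in> set ctable" "patS T = q" "inh (xS T) (map rv V2)" and gT: "good T"
    using I2 by (auto simp: Inv_def)
  have V2ne: "V2 \<noteq> []"
  proof
    assume V2e: "V2 = []"
    obtain ws where h: "\<forall>(a,u)\<in>set ws. 0 \<le> a \<and> u \<in> set (map rv V2)"
        "sum_list (map fst ws) = 1" "vle (xS T) (vlsum ws)"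
      using e2(3) by (auto simp: inh_def cone_def)
    note s = h(2)
    have "ws = []"
    proof (cases ws)
      case (Cons w ws')
      then have "w \<in> set ws" by simp
      with h(1) have "case w of (a,u) \<Rightarrow> 0 \<le> a \<and> u \<in> set (map rv V2)" by (rule bspec)
      then show ?thesis by (cases w) (simp add: V2e)
    qed simp
    then show False using s by simp
  qed
  from chk e1(1) e2(1) V2ne have vchk: "\<forall>v\<in>set V1. allsel (cpat p q) (cout p q v (vbox V2)) * 250000 \<le> 537289 * Dsc * Dsc"
    unfolding chk_final_def list_all_iff by fastforce
  define r where "r = cpat p q"
  define B where "B = rv (vbox V2)"
  obtain ws where 1: "\<forall>(a,u)\<in>set ws. 0 \<le> a \<and> u \<in> set (map rv V1)" "sum_list (map fst ws) = 1" "vle (xS S) (vlsum ws)"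
    using e1(3) by (auto simp: inh_def cone_def)
  have yB: "vle (xS T) B" using inh_box[OF e2(3)] by (simp add: B_def)
  have "xv (allst (combine S T)) = allsel r (cout p q (xS S) (xS T))"
    using allst_x[OF combine_good[OF gS gT]] combine_pat_x[OF gS gT] e1(2) e2(2) by (simp add: r_def)
  also have "\<dots> \<le> allsel r (cout p q (vlsum ws) B)"
    by (rule allsel_mono, rule cout_mono[OF vnn_xS vnn_xS 1(3) yB])
  also have "\<dots> = allsel r (vlsum (map (\<lambda>(a,u). (a, cout p q u B)) ws))"
    by (simp only: cout_vlsum_l)
  also have "\<dots> = sum_list (map (\<lambda>(a,u). a * allsel r (cout p q u B)) ws)"
    by (simp only: allsel_vlsum sum_map_pair)
  also have "\<dots> \<le> sum_list (map fst ws) * cc^2"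
  proof (rule sum_list_bound, clarify)
    fix a u assume au: "(a,u) \<in> set ws"
    then obtain v where v: "v \<in> set V1" "u = rv v" using 1(1) by auto
    have "allsel r (cout p q u B) = allsel r (vsc (1/Dr^2) (vof (cout p q v (vbox V2))))"
      by (simp add: v B_def rv_cout)
    also have "\<dots> = (1/Dr^2) * of_int (allsel r (cout p q v (vbox V2)))"
      by (simp add: allsel_sc of_int_allsel)
    also have "\<dots> \<le> cc^2"
    proof -
      have "of_int (allsel r (cout p q v (vbox V2)) * 250000) \<le> (of_int (537289 * Dsc * Dsc) :: real)"
        using vchk v(1) by (simp only: r_def of_int_le_iff)
      then have "of_int (allsel r (cout p q v (vbox V2))) * 250000 \<le> 537289 * Dr * (Dr::real)"
        by (simp add: of_int_Dsc[symmetric])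
      then have "(1/Dr^2) * of_int (allsel r (cout p q v (vbox V2))) \<le> 537289 / 250000"
        using Dr_pos by (simp add: field_simps power2_eq_square)
      then show ?thesis by (simp only: cc2)
    qed
    finally show "0 \<le> a \<and> allsel r (cout p q u B) \<le> cc^2" using 1(1) au by auto
  qed
  also have "\<dots> = cc^2" using 1(2) by simp
  finally show ?thesis .
qed

definition leafst :: st3 where "leafst = ((0,1),(1,1),(0,0))"

lemma leaf_Inv: assumes "k \<le> 2" shows "Inv k leafst"
proof -
  have mem: "(k, (Some 1, None), [(100000, 68213, 0)]) \<in> set ctable"
    using assms by (cases k) (auto simp: ctable_def numeral_eq_Suc le_Suc_eq)
  have g: "good leafst" by (simp add: leafst_def good_def)
  have p: "patS leafst = (Some 1, None)" by (simp add: leafst_def patS_def lv_def)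
  have x: "xS leafst = (1, 500/733, 0)" by (simp add: leafst_def xS_def xv_def cc_def)
  have "inh (1, 500/733, 0) (map rv [(100000, 68213, 0)])"
    unfolding inh_def cone_def
    by (rule exI[of _ "[(1, rv (100000, 68213, 0))]"]) (simp add: rv_def Dr_def)
  then show ?thesis using mem g p x unfolding Inv_def by force
qed

section \<open>Splitting a tree at an edge\<close>

definition restr :: "'a set \<Rightarrow> ('a \<Rightarrow> 'a \<Rightarrow> bool) \<Rightarrow> 'a \<Rightarrow> 'a \<Rightarrow> bool" where
  "restr U E u v = (E u v \<and> u \<in> U \<and> v \<in> U)"

lemma path_props:
  "rtrancl_path R x ys z \<Longrightarrow> (\<forall>i. Suc i < length (x#ys) \<longrightarrow> R ((x#ys)!i) ((x#ys)!Suc i)) \<and> last (x#ys) = z"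
proof (induction rule: rtrancl_path.induct)
  case (base x) then show ?case by simp
next
  case (step x y ys z)
  show ?case
  proof (intro conjI allI impI)
    fix i assume i: "Suc i < length (x # y # ys)"
    show "R ((x # y # ys) ! i) ((x # y # ys) ! Suc i)"
    proof (cases i)
      case 0 then show ?thesis using step by simp
    next
      case (Suc j) then show ?thesis using step i by auto
    qed
  next
    show "last (x # y # ys) = z" using step by simp
  qed
qed

lemma sym_rtranclp:
  assumes "\<forall>u v. E u v \<longrightarrow> E v u" "E\<^sup>*\<^sup>* x y" shows "E\<^sup>*\<^sup>* y x"
proof -
  have "symp E" using assms(1) by (auto intro: sympI)
  then have "symp E\<^sup>*\<^sup>*" by (rule symp_rtranclp)
  then show ?thesis using assms(2) by (auto dest: sympD)
qed

lemma cycle_restr: "is_cycle (restr U E) cs \<Longrightarrow> is_cycle E cs"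
  by (auto simp: is_cycle_def restr_def)

lemma acyclic_restr: "acyclic_graph E \<Longrightarrow> acyclic_graph (restr U E)"
  using cycle_restr by (auto simp: acyclic_graph_def)

lemma simple_restr: "simple_graph V E \<Longrightarrow> U \<subseteq> V \<Longrightarrow> simple_graph U (restr U E)"
  by (auto simp: simple_graph_def restr_def intro: finite_subset)

lemma nb_restr: "u \<in> U \<Longrightarrow> neighbours (restr U E) u = neighbours E u \<inter> U"
  by (auto simp: neighbours_def restr_def)

lemma nb_finite: "simple_graph V E \<Longrightarrow> finite (neighbours E u)"
  by (rule finite_subset[of _ V]) (auto simp: simple_graph_def neighbours_def)

lemma tree_split:
  assumes T: "is_tree V E" and rb: "E r b"
  defines "E' \<equiv> \<lambda>u v. E u v \<and> \<not> ((u = r \<and> v = b) \<or> (u = b \<and> v = r))"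
  defines "V2 \<equiv> {v. E'\<^sup>*\<^sup>* b v}"
  defines "V1 \<equiv> V - V2"
  shows "r \<in> V1" "b \<in> V2" "V2 \<subseteq> V" "\<forall>u\<in>V1. \<forall>w\<in>V2. E u w \<longrightarrow> u = r \<and> w = b"
    "is_tree V1 (restr V1 E)" "is_tree V2 (restr V2 E)"
proof -
  have sg: "simple_graph V E" and cn: "connected_graph V E" and ac: "acyclic_graph E"
    using T by (auto simp: is_tree_def)
  have fin: "finite V" and inV: "\<And>u v. E u v \<Longrightarrow> u \<in> V \<and> v \<in> V"
    and sym: "\<And>u v. E u v \<Longrightarrow> E v u" and irr: "\<And>v. \<not> E v v"
    using sg by (auto simp: simple_graph_def)
  have rV: "r \<in> V" and bV: "b \<in> V" using inV[OF rb] by auto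
  have rnb: "r \<noteq> b" using rb irr by auto
  show bV2: "b \<in> V2" by (simp add: V2_def)
  have V2V: "E'\<^sup>*\<^sup>* b v \<Longrightarrow> v \<in> V" for v
    by (induction rule: rtranclp_induct) (auto simp: bV E'_def dest: inV)
  then show V2sub: "V2 \<subseteq> V" by (auto simp: V2_def)
  have rV2: "r \<notin> V2"
  proof
    assume "r \<in> V2"
    then have "E'\<^sup>*\<^sup>* b r" by (simp add: V2_def)
    then obtain xs where "rtrancl_path E' b xs r" by (auto simp: rtranclp_eq_rtrancl_path)
    then obtain xs' where p: "rtrancl_path E' b xs' r" and d: "distinct (b # xs')"
      by (rule rtrancl_path_distinct)
    from path_props[OF p] have st: "\<forall>i. Suc i < length (b#xs') \<longrightarrow> E' ((b#xs')!i) ((b#xs')!Suc i)"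
      and la: "last (b#xs') = r" by auto
    have ne: "xs' \<noteq> []" using la rnb by auto
    have len: "length xs' \<ge> 2"
    proof (rule ccontr)
      assume n2: "\<not> 2 \<le> length xs'"
      have l1: "length xs' = 1" using ne n2 by (cases xs') (auto simp: Suc_le_eq)
      then obtain y where y: "xs' = [y]" by (cases xs') auto
      then have "y = r" using la by simp
      moreover have "E' b y" using st y by (auto dest: spec[of _ 0])
      ultimately show False by (simp add: E'_def)
    qed
    have "is_cycle E (b # xs')"
      unfolding is_cycle_def
    proof (intro conjI allI impI)
      show "3 \<le> length (b # xs')" using len by simp
      show "distinct (b # xs')" by (rule d)
      fix i assume "Suc i < length (b # xs')"
      then show "E ((b # xs') ! i) ((b # xs') ! Suc i)" using st by (auto simp: E'_def)
    next
      show "E (last (b # xs')) (hd (b # xs'))" using la rb by simp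
    qed
    then show False using ac by (auto simp: acyclic_graph_def)
  qed
  show rV1: "r \<in> V1" using rV rV2 by (simp add: V1_def)
  show cross: "\<forall>u\<in>V1. \<forall>w\<in>V2. E u w \<longrightarrow> u = r \<and> w = b"
  proof (intro ballI impI)
    fix u w assume u: "u \<in> V1" and w: "w \<in> V2" and e: "E u w"
    have "\<not> E' w u"
    proof
      assume "E' w u"
      then have "E'\<^sup>*\<^sup>* b u" using w by (simp add: V2_def)
      then show False using u by (simp add: V1_def V2_def)
    qed
    then have "(w = r \<and> u = b) \<or> (w = b \<and> u = r)" using sym[OF e] by (simp add: E'_def)
    then show "u = r \<and> w = b" using w rV2 by auto
  qed
  show "is_tree V2 (restr V2 E)"
    unfolding is_tree_def
  proof (intro conjI)
    show "simple_graph V2 (restr V2 E)" by (rule simple_restr[OF sg V2sub])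
    show "acyclic_graph (restr V2 E)" by (rule acyclic_restr[OF ac])
    have reach: "E'\<^sup>*\<^sup>* b v \<Longrightarrow> (restr V2 E)\<^sup>*\<^sup>* b v" for v
    proof (induction rule: rtranclp_induct)
      case base then show ?case by simp
    next
      case (step u v)
      then have "u \<in> V2" "v \<in> V2" by (auto simp: V2_def)
      moreover have "E u v" using step by (simp add: E'_def)
      ultimately have "restr V2 E u v" by (simp add: restr_def)
      then show ?case using step by (simp add: rtranclp.rtrancl_into_rtrancl)
    qed
    have symR: "\<forall>u v. restr V2 E u v \<longrightarrow> restr V2 E v u" by (auto simp: restr_def sym)
    show "connected_graph V2 (restr V2 E)"
      unfolding connected_graph_def
    proof (intro conjI ballI)
      show "V2 \<noteq> {}" using bV2 by auto
      fix u v assume "u \<in> V2" "v \<in> V2"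
      then have "E'\<^sup>*\<^sup>* b u" "E'\<^sup>*\<^sup>* b v" by (auto simp: V2_def)
      then have "(restr V2 E)\<^sup>*\<^sup>* b u" "(restr V2 E)\<^sup>*\<^sup>* b v" by (auto intro: reach)
      then show "(restr V2 E)\<^sup>*\<^sup>* u v" using sym_rtranclp[OF symR] by (meson rtranclp_trans)
    qed
  qed
  show "is_tree V1 (restr V1 E)"
    unfolding is_tree_def
  proof (intro conjI)
    show "simple_graph V1 (restr V1 E)" by (rule simple_restr[OF sg]) (auto simp: V1_def)
    show "acyclic_graph (restr V1 E)" by (rule acyclic_restr[OF ac])
    have reach: "E\<^sup>*\<^sup>* r v \<Longrightarrow> v \<in> V1 \<longrightarrow> (restr V1 E)\<^sup>*\<^sup>* r v" for v
    proof (induction rule: rtranclp_induct)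
      case base then show ?case by simp
    next
      case (step u v)
      show ?case
      proof
        assume v: "v \<in> V1"
        show "(restr V1 E)\<^sup>*\<^sup>* r v"
        proof (cases "u \<in> V1")
          case True
          then have "restr V1 E u v" using v step by (simp add: restr_def)
          then show ?thesis using step True by (simp add: rtranclp.rtrancl_into_rtrancl)
        next
          case False
          then have "u \<in> V2" using inV[OF step(2)] by (simp add: V1_def)
          then have "v = r" using cross v sym[OF step(2)] by blast
          then show ?thesis by simp
        qed
      qed
    qed
    have symR: "\<forall>u v. restr V1 E u v \<longrightarrow> restr V1 E v u" by (auto simp: restr_def sym)
    show "connected_graph V1 (restr V1 E)"
      unfolding connected_graph_def
    proof (intro conjI ballI)
      show "V1 \<noteq> {}" using rV1 by auto
      fix u v assume u: "u \<in> V1" and v: "v \<in> V1"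
      have "E\<^sup>*\<^sup>* r u" "E\<^sup>*\<^sup>* r v" using cn rV u v by (auto simp: connected_graph_def V1_def)
      then have "(restr V1 E)\<^sup>*\<^sup>* r u" "(restr V1 E)\<^sup>*\<^sup>* r v" using reach u v by auto
      then show "(restr V1 E)\<^sup>*\<^sup>* u v" using sym_rtranclp[OF symR] by (meson rtranclp_trans)
    qed
  qed
qed

lemma chk1: "chk_class ctable cwits 1" by code_simp
lemma chk2: "chk_class ctable cwits 2" by code_simp
lemma chkf: "chk_final ctable" by code_simp

section \<open>Dissociation set families of rooted trees\<close>

definition D0 :: "'a set \<Rightarrow> ('a \<Rightarrow> 'a \<Rightarrow> bool) \<Rightarrow> 'a \<Rightarrow> 'a set set" where
  "D0 V E r = {F. dissociation_set V E F \<and> r \<notin> F}"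
definition D1 :: "'a set \<Rightarrow> ('a \<Rightarrow> 'a \<Rightarrow> bool) \<Rightarrow> 'a \<Rightarrow> 'a set set" where
  "D1 V E r = {F. dissociation_set V E F \<and> r \<in> F \<and> neighbours E r \<inter> F = {}}"
definition D2 :: "'a set \<Rightarrow> ('a \<Rightarrow> 'a \<Rightarrow> bool) \<Rightarrow> 'a \<Rightarrow> 'a set set" where
  "D2 V E r = {F. dissociation_set V E F \<and> r \<in> F \<and> neighbours E r \<inter> F \<noteq> {}}"
definition Dall :: "'a set \<Rightarrow> ('a \<Rightarrow> 'a \<Rightarrow> bool) \<Rightarrow> 'a set set" where
  "Dall V E = {F. dissociation_set V E F}"
definition st :: "'a set \<Rightarrow> ('a \<Rightarrow> 'a \<Rightarrow> bool) \<Rightarrow> 'a \<Rightarrow> st3" where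
  "st V E r = (ev (D0 V E r), ev (D1 V E r), ev (D2 V E r))"

lemma Dall_sub: "Dall V E \<subseteq> Pow V" by (auto simp: Dall_def dissociation_set_def)
lemma Dall_fin: "finite V \<Longrightarrow> finite (Dall V E)" using Dall_sub finite_Pow_iff finite_subset by metis
lemma D0_fin: "finite V \<Longrightarrow> finite (D0 V E r)"
  by (rule finite_subset[OF _ Dall_fin]) (auto simp: D0_def Dall_def)
lemma D1_fin: "finite V \<Longrightarrow> finite (D1 V E r)"
  by (rule finite_subset[OF _ Dall_fin]) (auto simp: D1_def Dall_def)
lemma D2_fin: "finite V \<Longrightarrow> finite (D2 V E r)"
  by (rule finite_subset[OF _ Dall_fin]) (auto simp: D2_def Dall_def)

lemma D0_sub: "X \<in> D0 V E r \<Longrightarrow> X \<subseteq> V" by (simp add: D0_def dissociation_set_def)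
lemma D1_sub: "X \<in> D1 V E r \<Longrightarrow> X \<subseteq> V" by (simp add: D1_def dissociation_set_def)
lemma D2_sub: "X \<in> D2 V E r \<Longrightarrow> X \<subseteq> V" by (simp add: D2_def dissociation_set_def)
lemma Dall_sub': "X \<in> Dall V E \<Longrightarrow> X \<subseteq> V" by (simp add: Dall_def dissociation_set_def)

lemma ev_Dall: assumes "finite V" shows "ev (Dall V E) = allst (st V E r)"
proof -
  have e: "Dall V E = (D0 V E r \<union> D1 V E r) \<union> D2 V E r" by (auto simp: Dall_def D0_def D1_def D2_def)
  have "ev ((D0 V E r \<union> D1 V E r) \<union> D2 V E r) = tplus (ev (D0 V E r \<union> D1 V E r)) (ev (D2 V E r))"
    using assms apply (intro ev_union) apply (simp_all add: D0_fin D1_fin D2_fin)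
    by (auto simp: D0_def D1_def D2_def)
  then have "ev (Dall V E) = tplus (ev (D0 V E r \<union> D1 V E r)) (ev (D2 V E r))" by (simp only: e)
  also have "ev (D0 V E r \<union> D1 V E r) = tplus (ev (D0 V E r)) (ev (D1 V E r))"
    using assms apply (intro ev_union) apply (simp_all add: D0_fin D1_fin)
    by (auto simp: D0_def D1_def)
  finally show ?thesis by (simp add: allst_def st_def)
qed

locale spl =
  fixes V :: "'a set" and E r b V1 V2
  assumes sg: "simple_graph V E" and un: "V1 \<union> V2 = V" and dj: "V1 \<inter> V2 = {}"
    and r1: "r \<in> V1" and b2: "b \<in> V2" and rb: "E r b"
    and cross: "\<forall>u\<in>V1. \<forall>w\<in>V2. E u w \<longrightarrow> u = r \<and> w = b"
begin

abbreviation "E1 \<equiv> restr V1 E"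
abbreviation "E2 \<equiv> restr V2 E"

lemma sym: "E u v \<Longrightarrow> E v u" using sg by (auto simp: simple_graph_def)
lemma inV: "E u v \<Longrightarrow> u \<in> V \<and> v \<in> V" using sg by (auto simp: simple_graph_def)
lemma finV: "finite V" using sg by (auto simp: simple_graph_def)
lemma b1: "b \<notin> V1" using b2 dj by auto
lemma r2: "r \<notin> V2" using r1 dj by auto

lemma nbV1: assumes v: "v \<in> V1" shows "neighbours E v = neighbours E1 v \<union> (if v = r then {b} else {})"
proof (intro set_eqI iffI)
  fix w assume "w \<in> neighbours E v"
  then have e: "E v w" by (simp add: neighbours_def)
  show "w \<in> neighbours E1 v \<union> (if v = r then {b} else {})"
  proof (cases "w \<in> V1")
    case True then show ?thesis using e v by (simp add: neighbours_def restr_def)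
  next
    case False
    then have "w \<in> V2" using inV[OF e] un by auto
    then have "v = r \<and> w = b" using cross v e by blast
    then show ?thesis by simp
  qed
next
  fix w assume "w \<in> neighbours E1 v \<union> (if v = r then {b} else {})"
  then show "w \<in> neighbours E v"
    using rb by (cases "v = r") (auto simp: neighbours_def restr_def)
qed

lemma nbV2: "v \<in> V2 \<Longrightarrow> neighbours E v = neighbours E2 v \<union> (if v = b then {r} else {})"
proof -
  assume v: "v \<in> V2"
  have "w \<in> V2" if "E v w" "w \<noteq> r \<or> v \<noteq> b" for w
  proof (rule ccontr)
    assume "w \<notin> V2"
    then have "w \<in> V1" using inV[OF that(1)] un by auto
    then have "w = r \<and> v = b" using cross v sym[OF that(1)] by blast
    then show False using that(2) by simp
  qed
  then show ?thesis using v sym[OF rb] by (auto simp: neighbours_def restr_def)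
qed

lemma finN: "finite (neighbours G v)" if "G = E \<or> G = E1 \<or> G = E2"
proof -
  have "neighbours G v \<subseteq> V" using that un by (auto simp: neighbours_def restr_def dest: inV)
  then show ?thesis using finV by (rule finite_subset)
qed

lemma card1:
  assumes v: "v \<in> V1"
  shows "card (neighbours E v \<inter> F) = card (neighbours E1 v \<inter> (F \<inter> V1)) + (if v = r \<and> b \<in> F then 1 else 0)"
proof -
  have "neighbours E v \<inter> F = (neighbours E1 v \<inter> (F \<inter> V1)) \<union> (if v = r \<and> b \<in> F then {b} else {})"
    using nbV1[OF v] by (auto simp: neighbours_def restr_def)
  moreover have "b \<notin> neighbours E1 v \<inter> (F \<inter> V1)" using b1 by auto
  moreover have "finite (neighbours E1 v \<inter> (F \<inter> V1))" using finN[of E1] by auto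
  ultimately show ?thesis by (auto simp: card_insert_if)
qed

lemma card2:
  assumes v: "v \<in> V2"
  shows "card (neighbours E v \<inter> F) = card (neighbours E2 v \<inter> (F \<inter> V2)) + (if v = b \<and> r \<in> F then 1 else 0)"
proof -
  have "neighbours E v \<inter> F = (neighbours E2 v \<inter> (F \<inter> V2)) \<union> (if v = b \<and> r \<in> F then {r} else {})"
    using nbV2[OF v] by (auto simp: neighbours_def restr_def)
  moreover have "r \<notin> neighbours E2 v \<inter> (F \<inter> V2)" using r2 by auto
  moreover have "finite (neighbours E2 v \<inter> (F \<inter> V2))" using finN[of E2] by auto
  ultimately show ?thesis by (auto simp: card_insert_if)
qed

lemma card0: "finite A \<Longrightarrow> card A + 1 \<le> 1 \<Longrightarrow> A = {}" by simp

lemma diss_split: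
  assumes F: "F \<subseteq> V"
  shows "dissociation_set V E F \<longleftrightarrow>
    dissociation_set V1 E1 (F \<inter> V1) \<and> dissociation_set V2 E2 (F \<inter> V2) \<and>
    (r \<in> F \<and> b \<in> F \<longrightarrow> neighbours E1 r \<inter> (F \<inter> V1) = {} \<and> neighbours E2 b \<inter> (F \<inter> V2) = {})"
proof
  assume d: "dissociation_set V E F"
  then have c: "\<And>v. v \<in> F \<Longrightarrow> card (neighbours E v \<inter> F) \<le> 1" by (auto simp: dissociation_set_def)
  have 1: "dissociation_set V1 E1 (F \<inter> V1)"
    unfolding dissociation_set_def using c card1 by fastforce
  have 2: "dissociation_set V2 E2 (F \<inter> V2)"
    unfolding dissociation_set_def using c card2 by fastforce
  have 3: "neighbours E1 r \<inter> (F \<inter> V1) = {} \<and> neighbours E2 b \<inter> (F \<inter> V2) = {}" if "r \<in> F" "b \<in> F"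
  proof
    have "card (neighbours E1 r \<inter> (F \<inter> V1)) + 1 \<le> 1" using c[OF that(1)] card1[OF r1, of F] that by simp
    then show "neighbours E1 r \<inter> (F \<inter> V1) = {}" using finN[of E1] by auto
    have "card (neighbours E2 b \<inter> (F \<inter> V2)) + 1 \<le> 1" using c[OF that(2)] card2[OF b2, of F] that by simp
    then show "neighbours E2 b \<inter> (F \<inter> V2) = {}" using finN[of E2] by auto
  qed
  show "dissociation_set V1 E1 (F \<inter> V1) \<and> dissociation_set V2 E2 (F \<inter> V2) \<and>
    (r \<in> F \<and> b \<in> F \<longrightarrow> neighbours E1 r \<inter> (F \<inter> V1) = {} \<and> neighbours E2 b \<inter> (F \<inter> V2) = {})"
    using 1 2 3 by blast
next
  assume h: "dissociation_set V1 E1 (F \<inter> V1) \<and> dissociation_set V2 E2 (F \<inter> V2) \<and>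
    (r \<in> F \<and> b \<in> F \<longrightarrow> neighbours E1 r \<inter> (F \<inter> V1) = {} \<and> neighbours E2 b \<inter> (F \<inter> V2) = {})"
  have c1: "\<And>v. v \<in> F \<inter> V1 \<Longrightarrow> card (neighbours E1 v \<inter> (F \<inter> V1)) \<le> 1"
    using h by (auto simp: dissociation_set_def)
  have c2: "\<And>v. v \<in> F \<inter> V2 \<Longrightarrow> card (neighbours E2 v \<inter> (F \<inter> V2)) \<le> 1"
    using h by (auto simp: dissociation_set_def)
  show "dissociation_set V E F"
    unfolding dissociation_set_def
  proof (intro conjI ballI)
    show "F \<subseteq> V" by (rule F)
    fix v assume v: "v \<in> F"
    show "card (neighbours E v \<inter> F) \<le> 1"
    proof (cases "v \<in> V1")
      case True
      show ?thesis
      proof (cases "v = r \<and> b \<in> F")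
        case True2: True
        then have "neighbours E1 r \<inter> (F \<inter> V1) = {}" using h v by auto
        then show ?thesis using card1[OF True, of F] True2 by simp
      next
        case False
        then show ?thesis using card1[OF True, of F] c1[of v] v True by auto
      qed
    next
      case False
      then have V2: "v \<in> V2" using v F un by auto
      show ?thesis
      proof (cases "v = b \<and> r \<in> F")
        case True2: True
        then have "neighbours E2 b \<inter> (F \<inter> V2) = {}" using h v by auto
        then show ?thesis using card2[OF V2, of F] True2 by simp
      next
        case False2: False
        then show ?thesis using card2[OF V2, of F] c2[of v] v V2 by auto
      qed
    qed
  qed
qed

lemma nbr_r: "neighbours E r \<inter> F = (neighbours E1 r \<inter> (F \<inter> V1)) \<union> (if b \<in> F then {b} else {})"
  using nbV1[OF r1] by (auto simp: neighbours_def restr_def)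

lemma dsub1: "dissociation_set V1 E1 X \<Longrightarrow> X \<subseteq> V1" by (simp add: dissociation_set_def)
lemma dsub2: "dissociation_set V2 E2 X \<Longrightarrow> X \<subseteq> V2" by (simp add: dissociation_set_def)

lemma parts:
  assumes "X \<subseteq> V1" "Y \<subseteq> V2"
  shows "(X \<union> Y) \<inter> V1 = X" "(X \<union> Y) \<inter> V2 = Y" "X \<union> Y \<subseteq> V"
  using assms dj un by auto

lemma decomp: "F \<subseteq> V \<Longrightarrow> F = (F \<inter> V1) \<union> (F \<inter> V2)" using un by auto

lemma prodU_iff: "F \<in> prodU A B \<longleftrightarrow> (\<exists>X\<in>A. \<exists>Y\<in>B. F = X \<union> Y)"
  by (auto simp: prodU_def)

lemma dissV: "dissociation_set V E F \<Longrightarrow> F \<subseteq> V" by (simp add: dissociation_set_def)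

lemma D0_eq: "D0 V E r = prodU (D0 V1 E1 r) (Dall V2 E2)"
proof (intro set_eqI iffI)
  fix F assume "F \<in> D0 V E r"
  then have d: "dissociation_set V E F" and r: "r \<notin> F" by (auto simp: D0_def)
  have FV: "F \<subseteq> V" using d by (rule dissV)
  have "F \<inter> V1 \<in> D0 V1 E1 r" "F \<inter> V2 \<in> Dall V2 E2"
    using diss_split[OF FV] d r by (auto simp: D0_def Dall_def)
  then show "F \<in> prodU (D0 V1 E1 r) (Dall V2 E2)" using decomp[OF FV] by (auto simp: prodU_iff)
next
  fix F assume "F \<in> prodU (D0 V1 E1 r) (Dall V2 E2)"
  then obtain X Y where X: "X \<in> D0 V1 E1 r" and Y: "Y \<in> Dall V2 E2" and F: "F = X \<union> Y"
    by (auto simp: prodU_iff)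
  have XV: "X \<subseteq> V1" and YV: "Y \<subseteq> V2" using X Y dsub1 dsub2 by (auto simp: D0_def Dall_def)
  note p = parts[OF XV YV]
  have "r \<notin> F" using X YV r2 F by (auto simp: D0_def)
  moreover have "dissociation_set V E F"
    using diss_split[OF p(3)[folded F]] X Y p(1,2) \<open>r \<notin> F\<close> F by (auto simp: D0_def Dall_def)
  ultimately show "F \<in> D0 V E r" by (simp add: D0_def)
qed

lemma D1_eq: "D1 V E r = prodU (D1 V1 E1 r) (D0 V2 E2 b)"
proof (intro set_eqI iffI)
  fix F assume "F \<in> D1 V E r"
  then have d: "dissociation_set V E F" and r: "r \<in> F" and n: "neighbours E r \<inter> F = {}" by (auto simp: D1_def)
  have FV: "F \<subseteq> V" using d by (rule dissV)
  have bF: "b \<notin> F" using n rb by (auto simp: neighbours_def)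
  have "neighbours E1 r \<inter> (F \<inter> V1) = {}" using n nbr_r[of F] by auto
  then have "F \<inter> V1 \<in> D1 V1 E1 r" "F \<inter> V2 \<in> D0 V2 E2 b"
    using diss_split[OF FV] d r bF r1 by (auto simp: D1_def D0_def)
  then show "F \<in> prodU (D1 V1 E1 r) (D0 V2 E2 b)" using decomp[OF FV] by (auto simp: prodU_iff)
next
  fix F assume "F \<in> prodU (D1 V1 E1 r) (D0 V2 E2 b)"
  then obtain X Y where X: "X \<in> D1 V1 E1 r" and Y: "Y \<in> D0 V2 E2 b" and F: "F = X \<union> Y"
    by (auto simp: prodU_iff)
  have XV: "X \<subseteq> V1" and YV: "Y \<subseteq> V2" using X Y dsub1 dsub2 by (auto simp: D1_def D0_def)
  note p = parts[OF XV YV]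
  have bF: "b \<notin> F" using XV b1 Y F by (auto simp: D0_def)
  have rF: "r \<in> F" using X F by (auto simp: D1_def)
  have d: "dissociation_set V E F"
    using diss_split[OF p(3)[folded F]] X Y p(1,2) bF F by (auto simp: D1_def D0_def)
  have "neighbours E r \<inter> F = {}" using nbr_r[of F] bF X p(1) F by (auto simp: D1_def)
  then show "F \<in> D1 V E r" using d rF by (simp add: D1_def)
qed

lemma D2_eq: "D2 V E r = prodU (D2 V1 E1 r) (D0 V2 E2 b) \<union> prodU (D1 V1 E1 r) (D1 V2 E2 b)"
proof (intro set_eqI iffI)
  fix F assume "F \<in> D2 V E r"
  then have d: "dissociation_set V E F" and r: "r \<in> F" and n: "neighbours E r \<inter> F \<noteq> {}" by (auto simp: D2_def)
  have FV: "F \<subseteq> V" using d by (rule dissV)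
  have ds: "dissociation_set V1 E1 (F \<inter> V1)" "dissociation_set V2 E2 (F \<inter> V2)"
    using diss_split[OF FV] d by auto
  show "F \<in> prodU (D2 V1 E1 r) (D0 V2 E2 b) \<union> prodU (D1 V1 E1 r) (D1 V2 E2 b)"
  proof (cases "b \<in> F")
    case True
    have "neighbours E1 r \<inter> (F \<inter> V1) = {}" "neighbours E2 b \<inter> (F \<inter> V2) = {}"
      using diss_split[OF FV] d r True by auto
    then have "F \<inter> V1 \<in> D1 V1 E1 r" "F \<inter> V2 \<in> D1 V2 E2 b"
      using ds r r1 True b2 by (auto simp: D1_def)
    then show ?thesis using decomp[OF FV] by (auto simp: prodU_iff)
  next
    case False
    have "neighbours E1 r \<inter> (F \<inter> V1) \<noteq> {}" using n nbr_r[of F] False by auto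
    then have "F \<inter> V1 \<in> D2 V1 E1 r" "F \<inter> V2 \<in> D0 V2 E2 b"
      using ds r r1 False by (auto simp: D2_def D0_def)
    then show ?thesis using decomp[OF FV] by (auto simp: prodU_iff)
  qed
next
  fix F assume "F \<in> prodU (D2 V1 E1 r) (D0 V2 E2 b) \<union> prodU (D1 V1 E1 r) (D1 V2 E2 b)"
  then show "F \<in> D2 V E r"
  proof
    assume "F \<in> prodU (D2 V1 E1 r) (D0 V2 E2 b)"
    then obtain X Y where X: "X \<in> D2 V1 E1 r" and Y: "Y \<in> D0 V2 E2 b" and F: "F = X \<union> Y"
      by (auto simp: prodU_iff)
    have XV: "X \<subseteq> V1" and YV: "Y \<subseteq> V2" using X Y dsub1 dsub2 by (auto simp: D2_def D0_def)
    note p = parts[OF XV YV]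
    have bF: "b \<notin> F" using XV b1 Y F by (auto simp: D0_def)
    have rF: "r \<in> F" using X F by (auto simp: D2_def)
    have d: "dissociation_set V E F"
      using diss_split[OF p(3)[folded F]] X Y p(1,2) bF F by (auto simp: D2_def D0_def)
    have "neighbours E r \<inter> F \<noteq> {}" using nbr_r[of F] X p(1) F by (auto simp: D2_def)
    then show "F \<in> D2 V E r" using d rF by (simp add: D2_def)
  next
    assume "F \<in> prodU (D1 V1 E1 r) (D1 V2 E2 b)"
    then obtain X Y where X: "X \<in> D1 V1 E1 r" and Y: "Y \<in> D1 V2 E2 b" and F: "F = X \<union> Y"
      by (auto simp: prodU_iff)
    have XV: "X \<subseteq> V1" and YV: "Y \<subseteq> V2" using X Y dsub1 dsub2 by (auto simp: D1_def)
    note p = parts[OF XV YV]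
    have bF: "b \<in> F" using Y F by (auto simp: D1_def)
    have rF: "r \<in> F" using X F by (auto simp: D1_def)
    have d: "dissociation_set V E F"
      using diss_split[OF p(3)[folded F]] X Y p(1,2) F by (auto simp: D1_def)
    have "neighbours E r \<inter> F \<noteq> {}" using nbr_r[of F] bF by auto
    then show "F \<in> D2 V E r" using d rF by (simp add: D2_def)
  qed
qed

lemma finV1: "finite V1" and finV2: "finite V2" using finV un by auto

lemma st_combine: "st V E r = combine (st V1 E1 r) (st V2 E2 b)"
proof -
  have sg1: "finite V1" "finite V2" using finV1 finV2 by auto
  have e0: "ev (D0 V E r) = ttimes (ev (D0 V1 E1 r)) (ev (Dall V2 E2))"
    unfolding D0_eq by (rule ev_prod[OF D0_fin[OF finV1] Dall_fin[OF finV2] D0_sub Dall_sub' finV1 finV2 dj])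
  have e1: "ev (D1 V E r) = ttimes (ev (D1 V1 E1 r)) (ev (D0 V2 E2 b))"
    unfolding D1_eq by (rule ev_prod[OF D1_fin[OF finV1] D0_fin[OF finV2] D1_sub D0_sub finV1 finV2 dj])
  have p1: "ev (prodU (D2 V1 E1 r) (D0 V2 E2 b)) = ttimes (ev (D2 V1 E1 r)) (ev (D0 V2 E2 b))"
    by (rule ev_prod[OF D2_fin[OF finV1] D0_fin[OF finV2] D2_sub D0_sub finV1 finV2 dj])
  have p2: "ev (prodU (D1 V1 E1 r) (D1 V2 E2 b)) = ttimes (ev (D1 V1 E1 r)) (ev (D1 V2 E2 b))"
    by (rule ev_prod[OF D1_fin[OF finV1] D1_fin[OF finV2] D1_sub D1_sub finV1 finV2 dj])
  have fp1: "finite (prodU (D2 V1 E1 r) (D0 V2 E2 b))" using sg1 by (simp add: prodU_def D2_fin D0_fin)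
  have fp2: "finite (prodU (D1 V1 E1 r) (D1 V2 E2 b))" using sg1 by (simp add: prodU_def D1_fin)
  have dis: "prodU (D2 V1 E1 r) (D0 V2 E2 b) \<inter> prodU (D1 V1 E1 r) (D1 V2 E2 b) = {}"
  proof -
    have "b \<notin> F" if "F \<in> prodU (D2 V1 E1 r) (D0 V2 E2 b)" for F
      using that b1 by (auto simp: prodU_iff D2_def D0_def dissociation_set_def)
    moreover have "b \<in> F" if "F \<in> prodU (D1 V1 E1 r) (D1 V2 E2 b)" for F
      using that by (auto simp: prodU_iff D1_def)
    ultimately show ?thesis by blast
  qed
  have e2: "ev (D2 V E r) = tplus (ttimes (ev (D2 V1 E1 r)) (ev (D0 V2 E2 b))) (ttimes (ev (D1 V1 E1 r)) (ev (D1 V2 E2 b)))"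
    unfolding D2_eq by (simp add: ev_union[OF fp1 fp2 dis] p1 p2)
  have ea: "ev (Dall V2 E2) = allst (st V2 E2 b)" by (rule ev_Dall[OF finV2])
  show ?thesis
    by (simp add: st_def e0 e1 e2 ea combine_def allst_def)
qed

end

lemma ev_single: "ev {X} = (card X, 1)"
proof -
  have e: "{F \<in> {X}. card F = Max (card ` {X})} = {X}" by auto
  show ?thesis unfolding ev_def e by simp
qed

lemma good_st:
  assumes "simple_graph V E" "r \<in> V" shows "good (st V E r)"
proof -
  have fin: "finite V" using assms by (simp add: simple_graph_def)
  have "{} \<in> D0 V E r" by (simp add: D0_def dissociation_set_def)
  then have a: "0 < snd (ev (D0 V E r))" using ev_pos[OF D0_fin[OF fin]] by blast
  have "{r} \<in> D1 V E r"
    using assms by (auto simp: D1_def dissociation_set_def neighbours_def simple_graph_def)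
  then have b: "0 < snd (ev (D1 V E r))" using ev_pos[OF D1_fin[OF fin]] by blast
  show ?thesis using a b by (simp add: good_def st_def)
qed

lemma leaf_case:
  assumes sg: "simple_graph V E" and cn: "connected_graph V E" and r: "r \<in> V" and d: "degree E r = 0"
  shows "V = {r}" and "st V E r = leafst"
proof -
  have fin: "finite V" using sg by (simp add: simple_graph_def)
  have N: "neighbours E r = {}" using d nb_finite[OF sg, of r] by (simp add: degree_def)
  then have nE: "\<not> E r y" for y by (auto simp: neighbours_def)
  show V: "V = {r}"
  proof
    show "V \<subseteq> {r}"
    proof
      fix v assume "v \<in> V"
      then have "E\<^sup>*\<^sup>* r v" using cn r by (auto simp: connected_graph_def)
      then show "v \<in> {r}" by (cases rule: converse_rtranclpE) (auto simp: nE)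
    qed
    show "{r} \<subseteq> V" using r by simp
  qed
  have nrr: "\<not> E r r" using sg by (simp add: simple_graph_def)
  have "D0 V E r = {{}}" by (auto simp: D0_def dissociation_set_def V)
  moreover have "D1 V E r = {{r}}"
    using N by (auto simp: D1_def dissociation_set_def V neighbours_def nrr)
  moreover have "D2 V E r = {}" using N by (auto simp: D2_def)
  ultimately show "st V E r = leafst" by (simp add: st_def leafst_def ev_single)
qed

lemma tree_split_ex:
  assumes T: "is_tree V E" and rb: "E r b"
  shows "\<exists>V1 V2. spl V E r b V1 V2 \<and> is_tree V1 (restr V1 E) \<and> is_tree V2 (restr V2 E)"
proof -
  define E' where "E' \<equiv> \<lambda>u v. E u v \<and> \<not> ((u = r \<and> v = b) \<or> (u = b \<and> v = r))"
  define V2 where "V2 \<equiv> {v. E'\<^sup>*\<^sup>* b v}"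
  define V1 where "V1 \<equiv> V - V2"
  note ts = tree_split[OF T rb, folded E'_def, folded V2_def, folded V1_def]
  have sg: "simple_graph V E" using T by (simp add: is_tree_def)
  have un: "V1 \<union> V2 = V" using ts(3) by (auto simp: V1_def)
  have dj: "V1 \<inter> V2 = {}" by (auto simp: V1_def)
  have "spl V E r b V1 V2"
    unfolding spl_def using sg un dj ts(1,2,4) rb by blast
  then show ?thesis using ts by blast
qed

lemma deg_restr_le: "simple_graph V E \<Longrightarrow> u \<in> U \<Longrightarrow> degree (restr U E) u \<le> degree E u"
  unfolding degree_def by (simp add: nb_restr card_mono nb_finite)

lemma main_ind:
  assumes c1: "chk_class ctable cwits 1" and c2: "chk_class ctable cwits 2"
  shows "subcubic_tree V E \<Longrightarrow> r \<in> V \<Longrightarrow> degree E r \<le> k \<Longrightarrow> k \<le> 2 \<Longrightarrow> Inv k (st V E r)"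
proof (induction "card V" arbitrary: V E r k rule: less_induct)
  case less
  have T: "is_tree V E" and d3: "\<forall>v\<in>V. degree E v \<le> 3" using less.prems(1) by (auto simp: subcubic_tree_def)
  have sg: "simple_graph V E" and cn: "connected_graph V E" using T by (auto simp: is_tree_def)
  show ?case
  proof (cases "degree E r = 0")
    case True
    then show ?thesis using leaf_case[OF sg cn less.prems(2)] leaf_Inv less.prems(4) by simp
  next
    case False
    then have "neighbours E r \<noteq> {}" by (auto simp: degree_def)
    then obtain b where rb: "E r b" by (auto simp: neighbours_def)
    obtain V1 V2 where sp: "spl V E r b V1 V2" and T1: "is_tree V1 (restr V1 E)" and T2: "is_tree V2 (restr V2 E)"
      using tree_split_ex[OF T rb] by blast
    interpret spl V E r b V1 V2 by (rule sp)
    have bV: "b \<in> V" using b2 un by auto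
    have fN: "finite (neighbours E v)" for v using nb_finite[OF sg] .
    have dr: "degree E1 r = degree E r - 1"
    proof -
      have "neighbours E1 r = neighbours E r - {b}" using nbV1[OF r1] b1
        by (auto simp: neighbours_def restr_def)
      moreover have "b \<in> neighbours E r" using rb by (simp add: neighbours_def)
      ultimately show ?thesis using fN by (simp add: degree_def)
    qed
    have db: "degree E2 b = degree E b - 1"
    proof -
      have "neighbours E2 b = neighbours E b - {r}" using nbV2[OF b2] r2
        by (auto simp: neighbours_def restr_def)
      moreover have "r \<in> neighbours E b" using sym[OF rb] by (simp add: neighbours_def)
      ultimately show ?thesis using fN by (simp add: degree_def)
    qed
    have sc1: "subcubic_tree V1 E1"
      using T1 d3 deg_restr_le[OF sg] un unfolding subcubic_tree_def by (meson UnCI le_trans)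
    have sc2: "subcubic_tree V2 E2"
      using T2 d3 deg_restr_le[OF sg] un unfolding subcubic_tree_def by (meson UnCI le_trans)
    have finV: "finite V" using sg by (simp add: simple_graph_def)
    have lt1: "card V1 < card V" using b1 bV un finV by (intro psubset_card_mono) auto
    have lt2: "card V2 < card V" using r2 r1 un finV by (intro psubset_card_mono) auto
    have kpos: "1 \<le> k" using False less.prems(3) by simp
    have I1: "Inv (k-1) (st V1 E1 r)"
      using less.hyps[OF lt1 sc1 r1] dr less.prems(3,4) by simp
    have "degree E2 b \<le> 2" using db d3 bV by auto
    then have I2: "Inv 2 (st V2 E2 b)"
      using less.hyps[OF lt2 sc2 b2] by simp
    have "k = 1 \<or> k = 2" using kpos less.prems(4) by arith
    then have chk: "chk_class ctable cwits k" using c1 c2 by auto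
    show ?thesis using Inv_step[OF chk I1 I2] st_combine by simp
  qed
qed

lemma final_bound:
  assumes c1: "chk_class ctable cwits 1" and c2: "chk_class ctable cwits 2" and cf: "chk_final ctable"
    and sc: "subcubic_tree V E"
  shows "real (num_max_dissociation_sets V E) \<le> (1.466::real) ^ (dissociation_number V E + 2)"
proof -
  have T: "is_tree V E" and d3: "\<forall>v\<in>V. degree E v \<le> 3" using sc by (auto simp: subcubic_tree_def)
  have sg: "simple_graph V E" and cn: "connected_graph V E" using T by (auto simp: is_tree_def)
  have finV: "finite V" using sg by (simp add: simple_graph_def)
  obtain r where r: "r \<in> V" using cn by (auto simp: connected_graph_def)
  have bound: "xv (allst (st V E r)) \<le> cc^2"
  proof (cases "degree E r = 0")
    case True
    then have "st V E r = leafst" using leaf_case[OF sg cn r] by simp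
    moreover have "xv (allst leafst) = 500/733" by (simp add: leafst_def allst_def tplus_def xv_def cc_def)
    ultimately show ?thesis by (simp add: cc2)
  next
    case False
    then have "neighbours E r \<noteq> {}" by (auto simp: degree_def)
    then obtain b where rb: "E r b" by (auto simp: neighbours_def)
    obtain V1 V2 where sp: "spl V E r b V1 V2" and T1: "is_tree V1 (restr V1 E)" and T2: "is_tree V2 (restr V2 E)"
      using tree_split_ex[OF T rb] by blast
    interpret spl V E r b V1 V2 by (rule sp)
    have bV: "b \<in> V" using b2 un by auto
    have fN: "finite (neighbours E v)" for v using nb_finite[OF sg] .
    have dr: "degree E1 r = degree E r - 1"
    proof -
      have "neighbours E1 r = neighbours E r - {b}" using nbV1[OF r1] b1
        by (auto simp: neighbours_def restr_def)
      moreover have "b \<in> neighbours E r" using rb by (simp add: neighbours_def)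
      ultimately show ?thesis using fN by (simp add: degree_def)
    qed
    have db: "degree E2 b = degree E b - 1"
    proof -
      have "neighbours E2 b = neighbours E b - {r}" using nbV2[OF b2] r2
        by (auto simp: neighbours_def restr_def)
      moreover have "r \<in> neighbours E b" using sym[OF rb] by (simp add: neighbours_def)
      ultimately show ?thesis using fN by (simp add: degree_def)
    qed
    have sc1: "subcubic_tree V1 E1"
      using T1 d3 deg_restr_le[OF sg] un unfolding subcubic_tree_def by (meson UnCI le_trans)
    have sc2: "subcubic_tree V2 E2"
      using T2 d3 deg_restr_le[OF sg] un unfolding subcubic_tree_def by (meson UnCI le_trans)
    have "degree E1 r \<le> 2" using dr d3 r by auto
    then have I1: "Inv 2 (st V1 E1 r)"
      using main_ind[OF c1 c2 sc1 r1] by simp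
    have "degree E2 b \<le> 2" using db d3 bV by auto
    then have I2: "Inv 2 (st V2 E2 b)"
      using main_ind[OF c1 c2 sc2 b2] by simp
    show ?thesis using Inv_final[OF cf I1 I2] st_combine by simp
  qed
  have ne: "Dall V E \<noteq> {}" by (auto simp: Dall_def dissociation_set_def)
  have ev1: "ev (Dall V E) = (Max (card ` Dall V E), card {F\<in>Dall V E. card F = Max (card ` Dall V E)})"
    using ne by (simp add: ev_def)
  have m: "Max (card ` Dall V E) = dissociation_number V E"
    by (simp add: Dall_def dissociation_number_def)
  have n: "card {F\<in>Dall V E. card F = dissociation_number V E} = num_max_dissociation_sets V E"
    by (simp add: Dall_def num_max_dissociation_sets_def max_dissociation_set_def)
  have evD: "ev (Dall V E) = (dissociation_number V E, num_max_dissociation_sets V E)"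
    using ev1 m n by simp
  have "xv (ev (Dall V E)) \<le> cc^2" using bound ev_Dall[OF finV, of E r] by simp
  then have "real (num_max_dissociation_sets V E) / cc ^ dissociation_number V E \<le> cc^2"
    by (simp add: evD xv_def)
  then have "real (num_max_dissociation_sets V E) \<le> cc^2 * cc ^ dissociation_number V E"
    using cc_pos by (simp add: divide_le_eq)
  also have "\<dots> = cc ^ (dissociation_number V E + 2)" by (simp add: power_add power2_eq_square mult.commute)
  finally show ?thesis by (simp add: cc_def)
qed

theorem corollary3p5:
  fixes V :: "'a set" and E :: "'a \<Rightarrow> 'a \<Rightarrow> bool"
  assumes "subcubic_tree V E"
  shows "real (num_max_dissociation_sets V E)
           \<le> (1.466::real) ^ (dissociation_number V E + 2)"
  using final_bound[OF chk1 chk2 chkf assms] .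

end
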